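(* Let $\lambda\in\mathbb C$ be such that the generalized Verma module $M^+_\lambda$ is irreducible, with generating vector $v_\lambda$. Let $\mathcal V$ be a $U\mathfrak g$-module and $w\in\mathcal V$. Then there is at most one element $z\in M^+_\lambda\check\otimes\mathcal V$ which is $U\mathfrak g$-invariant (i.e. $x\cdot z=0$ for all $x\in\mathfrak g$, with $\mathfrak g$ acting via the coproduct) and satisfies $z\in v_\lambda\otimes w+(U\mathfrak n_-)_{<0}\cdot v_\lambda\check\otimes\mathcal V$.
   Context: $\mathfrak g=\bigoplus_{i\in\mathbb Z}\mathfrak g_i$ is a $\mathbb Z$-graded complex Lie algebra with finite-dimensional components; $\mathfrak n_+=\bigoplus_{i>0}\mathfrak g_i$, $\mathfrak n_-=\bigoplus_{i<0}\mathfrak g_i$, $\mathfrak p_+=\mathfrak g_0\oplus\mathfrak n_+$. $\chi:\mathfrak g_0\to\mathbb C$ is a nonsingular character (Lie algebra homomorphism such that $(u,v)\mapsto\chi([u,v]_0)$ is a nondegenerate pairing $\mathfrak n_+\times\mathfrak n_-\to\mathbb C$, $x_0$ being the $\mathfrak g_0$-component). For $\lambda\in\mathbb C$, $\chi_\lambda=\lambda\chi$ is made a $\mathfrak p_+$-module by letting $\mathfrak n_+$ act by zero, and $M^+_\lambda=U\mathfrak g\otimes_{U\mathfrak p_+}\chi_\lambda$ is the generalized Verma module with generating vector $v_\lambda=1\otimes1$; $M^+_\lambda$ is a free $U\mathfrak n_-$-module on $v_\lambda$ and is graded by $(M^+_\lambda)_{-n}=(U\mathfrak n_-)_{-n}v_\lambda$.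 For a $\mathbb Z$-graded $U\mathfrak g$-module $M$ and any $U\mathfrak g$-module $V$, the completed tensor product is $M\check\otimes V=\prod_i M_i\otimes V$ (formal infinite sums of homogeneous components), with $U\mathfrak g$ acting via the coproduct $\Delta(x)=x\otimes1+1\otimes x$, $x\in\mathfrak g$. *)

theory Defs
  imports Complex_Main
begin

definition lie_algebra :: "(complex \<Rightarrow> 'g \<Rightarrow> 'g) \<Rightarrow> ('g \<Rightarrow> 'g \<Rightarrow> 'g::ab_group_add) \<Rightarrow> bool" where
  "lie_algebra sg br \<longleftrightarrow>
     vector_space sg \<and>
     (\<forall>x y z. br (x + y) z = br x z + br y z) \<and>
     (\<forall>x y z. br x (y + z) = br x y + br x z) \<and>
     (\<forall>c x y. br (sg c x) y = sg c (br x y)) \<and>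
     (\<forall>c x y. br x (sg c y) = sg c (br x y)) \<and>
     (\<forall>x. br x x = 0) \<and>
     (\<forall>x y z. br x (br y z) + br y (br z x) + br z (br x y) = 0)"

definition graded_lie_algebra ::
  "(complex \<Rightarrow> 'g \<Rightarrow> 'g) \<Rightarrow> ('g \<Rightarrow> 'g \<Rightarrow> 'g::ab_group_add) \<Rightarrow> (int \<Rightarrow> 'g set) \<Rightarrow> bool" where
  "graded_lie_algebra sg br G \<longleftrightarrow>
     lie_algebra sg br \<and>
     (\<forall>i. module.subspace sg (G i)) \<and>
     (\<forall>i. \<exists>B. finite B \<and> G i \<subseteq> module.span sg B) \<and>
     (\<forall>i j x y. x \<in> G i \<longrightarrow> y \<in> G j \<longrightarrow> br x y \<in> G (i + j)) \<and>
     (\<forall>x. \<exists>!f. finite {i. f i \<noteq> 0} \<and> (\<forall>i. f i \<in> G i) \<and> x = (\<Sum>i\<in>{i. f i \<noteq> 0}. f i))"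

definition gpr :: "(int \<Rightarrow> 'g set) \<Rightarrow> int \<Rightarrow> 'g \<Rightarrow> 'g::ab_group_add" where
  "gpr G i x = (THE f. finite {i. f i \<noteq> 0} \<and> (\<forall>i. f i \<in> G i) \<and> x = (\<Sum>i\<in>{i. f i \<noteq> 0}. f i)) i"

definition nplus :: "(int \<Rightarrow> 'g set) \<Rightarrow> 'g::ab_group_add set" where
  "nplus G = {x. \<forall>i\<le>0. gpr G i x = 0}"

definition nminus :: "(int \<Rightarrow> 'g set) \<Rightarrow> 'g::ab_group_add set" where
  "nminus G = {x. \<forall>i\<ge>0. gpr G i x = 0}"

definition pplus :: "(int \<Rightarrow> 'g set) \<Rightarrow> 'g::ab_group_add set" where
  "pplus G = {x. \<forall>i<0. gpr G i x = 0}"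

text \<open>Only the values of chi on G 0 matter.\<close>

definition nonsingular_character ::
  "(complex \<Rightarrow> 'g \<Rightarrow> 'g) \<Rightarrow> ('g \<Rightarrow> 'g \<Rightarrow> 'g::ab_group_add) \<Rightarrow> (int \<Rightarrow> 'g set) \<Rightarrow> ('g \<Rightarrow> complex) \<Rightarrow> bool" where
  "nonsingular_character sg br G chi \<longleftrightarrow>
     (\<forall>x\<in>G 0. \<forall>y\<in>G 0. chi (x + y) = chi x + chi y) \<and>
     (\<forall>c. \<forall>x\<in>G 0. chi (sg c x) = c * chi x) \<and>
     (\<forall>x\<in>G 0. \<forall>y\<in>G 0. chi (br x y) = 0) \<and>
     (\<forall>u\<in>nplus G. u \<noteq> 0 \<longrightarrow> (\<exists>v\<in>nminus G. chi (gpr G 0 (br u v)) \<noteq> 0)) \<and>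
     (\<forall>v\<in>nminus G. v \<noteq> 0 \<longrightarrow> (\<exists>u\<in>nplus G. chi (gpr G 0 (br u v)) \<noteq> 0))"

definition lie_module ::
  "(complex \<Rightarrow> 'g \<Rightarrow> 'g) \<Rightarrow> ('g \<Rightarrow> 'g \<Rightarrow> 'g::ab_group_add) \<Rightarrow>
   (complex \<Rightarrow> 'v \<Rightarrow> 'v) \<Rightarrow> ('g \<Rightarrow> 'v \<Rightarrow> 'v::ab_group_add) \<Rightarrow> bool" where
  "lie_module sg br sv act \<longleftrightarrow>
     vector_space sv \<and>
     (\<forall>x y v. act (x + y) v = act x v + act y v) \<and>
     (\<forall>c x v. act (sg c x) v = sv c (act x v)) \<and>
     (\<forall>x v w. act x (v + w) = act x v + act x w) \<and>
     (\<forall>x c v. act x (sv c v) = sv c (act x v)) \<and>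
     (\<forall>x y v. act (br x y) v = act x (act y v) - act y (act x v))"

text \<open>Elements of the free associative algebra C<g> on the underlying set of g:
finitely supported functions on words.\<close>

type_synonym 'g fa = "'g list \<Rightarrow> complex"

definition fa_fin :: "'g fa \<Rightarrow> bool" where
  "fa_fin a \<longleftrightarrow> finite {w. a w \<noteq> 0}"

definition fa_zero :: "'g fa" where "fa_zero = (\<lambda>w. 0)"
definition fa_add :: "'g fa \<Rightarrow> 'g fa \<Rightarrow> 'g fa" where "fa_add a b = (\<lambda>w. a w + b w)"
definition fa_diff :: "'g fa \<Rightarrow> 'g fa \<Rightarrow> 'g fa" where "fa_diff a b = (\<lambda>w. a w - b w)"
definition fa_smul :: "complex \<Rightarrow> 'g fa \<Rightarrow> 'g fa" where "fa_smul c a = (\<lambda>w. c * a w)"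
definition fa_mul :: "'g fa \<Rightarrow> 'g fa \<Rightarrow> 'g fa" where
  "fa_mul a b = (\<lambda>w. \<Sum>k\<le>length w. a (take k w) * b (drop k w))"
definition fa_word :: "'g list \<Rightarrow> 'g fa" where "fa_word u = (\<lambda>w. if w = u then 1 else 0)"
definition fa_one :: "'g fa" where "fa_one = fa_word []"
definition fa_gen :: "'g \<Rightarrow> 'g fa" where "fa_gen x = fa_word [x]"

text \<open>The two-sided ideal of C<g> whose quotient is U g: generated by linearity of
the generators and by x y - y x - [x,y].\<close>

inductive_set ug_ideal :: "(complex \<Rightarrow> 'g \<Rightarrow> 'g) \<Rightarrow> ('g \<Rightarrow> 'g \<Rightarrow> 'g::ab_group_add) \<Rightarrow> 'g fa set"
  for sg br where
  ug_add_gen: "fa_diff (fa_gen (x + y)) (fa_add (fa_gen x) (fa_gen y)) \<in> ug_ideal sg br"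
| ug_smul_gen: "fa_diff (fa_gen (sg c x)) (fa_smul c (fa_gen x)) \<in> ug_ideal sg br"
| ug_comm: "fa_diff (fa_diff (fa_mul (fa_gen x) (fa_gen y)) (fa_mul (fa_gen y) (fa_gen x))) (fa_gen (br x y)) \<in> ug_ideal sg br"
| ug_zero: "fa_zero \<in> ug_ideal sg br"
| ug_add: "a \<in> ug_ideal sg br \<Longrightarrow> b \<in> ug_ideal sg br \<Longrightarrow> fa_add a b \<in> ug_ideal sg br"
| ug_smul: "a \<in> ug_ideal sg br \<Longrightarrow> fa_smul c a \<in> ug_ideal sg br"
| ug_lmul: "a \<in> ug_ideal sg br \<Longrightarrow> fa_fin p \<Longrightarrow> fa_mul p a \<in> ug_ideal sg br"
| ug_rmul: "a \<in> ug_ideal sg br \<Longrightarrow> fa_fin p \<Longrightarrow> fa_mul a p \<in> ug_ideal sg br"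

text \<open>The generalized Verma module M^+_lambda = U g (x)_{U p_+} chi_lambda
= U g / U g {x - chi_lambda(x) | x in p_+}, presented as C<g> modulo the left
ideal verma_ideal (which contains ug_ideal).  Here p_+ acts on chi_lambda by
x |-> lambda * chi(x_0) (so n_+ acts by zero).  M^+_lambda is the quotient
{a. fa_fin a} / verma_ideal, g acts by left multiplication with fa_gen x and
the generating vector v_lambda is the class of fa_one.\<close>

inductive_set verma_ideal ::
  "(complex \<Rightarrow> 'g \<Rightarrow> 'g) \<Rightarrow> ('g \<Rightarrow> 'g \<Rightarrow> 'g::ab_group_add) \<Rightarrow> (int \<Rightarrow> 'g set) \<Rightarrow> ('g \<Rightarrow> complex) \<Rightarrow> complex \<Rightarrow> 'g fa set"
  for sg br G chi lam where
  vi_ug: "a \<in> ug_ideal sg br \<Longrightarrow> a \<in> verma_ideal sg br G chi lam"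
| vi_par: "x \<in> pplus G \<Longrightarrow> fa_diff (fa_gen x) (fa_smul (lam * chi (gpr G 0 x)) fa_one) \<in> verma_ideal sg br G chi lam"
| vi_add: "a \<in> verma_ideal sg br G chi lam \<Longrightarrow> b \<in> verma_ideal sg br G chi lam \<Longrightarrow> fa_add a b \<in> verma_ideal sg br G chi lam"
| vi_smul: "a \<in> verma_ideal sg br G chi lam \<Longrightarrow> fa_smul c a \<in> verma_ideal sg br G chi lam"
| vi_lmul: "a \<in> verma_ideal sg br G chi lam \<Longrightarrow> fa_fin p \<Longrightarrow> fa_mul p a \<in> verma_ideal sg br G chi lam"

text \<open>Irreducibility of M^+_lambda: M is nonzero and every g-submodule
(= subspace L/J with J = verma_ideal, J \<subseteq> L \<subseteq> C<g>, stable under g) is 0 or M.\<close>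

definition verma_irreducible ::
  "(complex \<Rightarrow> 'g \<Rightarrow> 'g) \<Rightarrow> ('g \<Rightarrow> 'g \<Rightarrow> 'g::ab_group_add) \<Rightarrow> (int \<Rightarrow> 'g set) \<Rightarrow> ('g \<Rightarrow> complex) \<Rightarrow> complex \<Rightarrow> bool" where
  "verma_irreducible sg br G chi lam \<longleftrightarrow>
     fa_one \<notin> verma_ideal sg br G chi lam \<and>
     (\<forall>L. verma_ideal sg br G chi lam \<subseteq> L \<and> L \<subseteq> {a. fa_fin a} \<and>
          (\<forall>a\<in>L. \<forall>b\<in>L. fa_add a b \<in> L) \<and> (\<forall>c. \<forall>a\<in>L. fa_smul c a \<in> L) \<and>
          (\<forall>x. \<forall>a\<in>L. fa_mul (fa_gen x) a \<in> L)
        \<longrightarrow> L = verma_ideal sg br G chi lam \<or> L = {a. fa_fin a})"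

text \<open>(U n_-)_{-n}, as a subspace of C<g>: the span of the monomials
y_1 ... y_k with y_j in G d_j, d_j < 0 and d_1 + ... + d_k = -n.\<close>

inductive_set un_minus_deg :: "(int \<Rightarrow> 'g set) \<Rightarrow> nat \<Rightarrow> 'g fa set" for G n where
  und_zero: "fa_zero \<in> un_minus_deg G n"
| und_mono: "(\<forall>(d, y)\<in>set ds. d < 0 \<and> y \<in> G d) \<Longrightarrow> sum_list (map fst ds) = - int n \<Longrightarrow>
             fa_word (map snd ds) \<in> un_minus_deg G n"
| und_add: "a \<in> un_minus_deg G n \<Longrightarrow> b \<in> un_minus_deg G n \<Longrightarrow> fa_add a b \<in> un_minus_deg G n"
| und_smul: "a \<in> un_minus_deg G n \<Longrightarrow> fa_smul c a \<in> un_minus_deg G n"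

text \<open>Representatives of elements of (M^+_lambda)_{-n} = (U n_-)_{-n} v_lambda.\<close>

definition verma_comp ::
  "(complex \<Rightarrow> 'g \<Rightarrow> 'g) \<Rightarrow> ('g \<Rightarrow> 'g \<Rightarrow> 'g::ab_group_add) \<Rightarrow> (int \<Rightarrow> 'g set) \<Rightarrow> ('g \<Rightarrow> complex) \<Rightarrow> complex \<Rightarrow> nat \<Rightarrow> 'g fa set" where
  "verma_comp sg br G chi lam n =
     {m. fa_fin m \<and> (\<exists>a\<in>un_minus_deg G n. fa_diff m a \<in> verma_ideal sg br G chi lam)}"

text \<open>A finite formal sum sum_k m_k (x) v_k (m_k representatives of elements of
M, v_k in V) is zero in M (x) V iff sum_k f(m_k) v_k = 0 for every linear
functional f on M (i.e. every linear functional on C<g> vanishing on the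
verma ideal).\<close>

definition tensor_zero ::
  "(complex \<Rightarrow> 'g \<Rightarrow> 'g) \<Rightarrow> ('g \<Rightarrow> 'g \<Rightarrow> 'g::ab_group_add) \<Rightarrow> (int \<Rightarrow> 'g set) \<Rightarrow> ('g \<Rightarrow> complex) \<Rightarrow> complex \<Rightarrow>
   (complex \<Rightarrow> 'v \<Rightarrow> 'v::ab_group_add) \<Rightarrow> ('g fa \<times> 'v) list \<Rightarrow> bool" where
  "tensor_zero sg br G chi lam sv ts \<longleftrightarrow>
     (\<forall>f :: 'g fa \<Rightarrow> complex.
        (\<forall>a b. fa_fin a \<longrightarrow> fa_fin b \<longrightarrow> f (fa_add a b) = f a + f b) \<and>
        (\<forall>c a. fa_fin a \<longrightarrow> f (fa_smul c a) = c * f a) \<and>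
        (\<forall>a\<in>verma_ideal sg br G chi lam. f a = 0)
      \<longrightarrow> sum_list (map (\<lambda>(m, v). sv (f m) v) ts) = 0)"

text \<open>An element z of M check-tensor V = prod_n M_{-n} (x) V is represented by
its homogeneous components: z n is a finite formal sum in M_{-n} (x) V.\<close>

type_synonym ('g, 'v) ctensor = "nat \<Rightarrow> ('g fa \<times> 'v) list"

definition ctensor_wf ::
  "(complex \<Rightarrow> 'g \<Rightarrow> 'g) \<Rightarrow> ('g \<Rightarrow> 'g \<Rightarrow> 'g::ab_group_add) \<Rightarrow> (int \<Rightarrow> 'g set) \<Rightarrow> ('g \<Rightarrow> complex) \<Rightarrow> complex \<Rightarrow>
   ('g, 'v) ctensor \<Rightarrow> bool" where
  "ctensor_wf sg br G chi lam z \<longleftrightarrow> (\<forall>n. \<forall>(m, v)\<in>set (z n). m \<in> verma_comp sg br G chi lam n)"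

text \<open>Action of x in g on M check-tensor V through Delta(x) = x (x) 1 + 1 (x) x:
the degree -n component of x.z collects x_i . z_{n+i} (x_i of degree i maps
M_{-(n+i)} to M_{-n}) and (1 (x) x) z_n.\<close>

definition ctensor_act ::
  "(int \<Rightarrow> 'g set) \<Rightarrow> ('g \<Rightarrow> 'v \<Rightarrow> 'v) \<Rightarrow> 'g::ab_group_add \<Rightarrow> ('g, 'v) ctensor \<Rightarrow> ('g, 'v) ctensor" where
  "ctensor_act G act x z = (\<lambda>n.
     concat (map (\<lambda>i. map (\<lambda>(m, v). (fa_mul (fa_gen (gpr G i x)) m, v)) (z (nat (int n + i))))
                 (sorted_list_of_set {i. gpr G i x \<noteq> 0 \<and> 0 \<le> int n + i}))
     @ map (\<lambda>(m, v). (m, act x v)) (z n))"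

definition ctensor_invariant ::
  "(complex \<Rightarrow> 'g \<Rightarrow> 'g) \<Rightarrow> ('g \<Rightarrow> 'g \<Rightarrow> 'g::ab_group_add) \<Rightarrow> (int \<Rightarrow> 'g set) \<Rightarrow> ('g \<Rightarrow> complex) \<Rightarrow> complex \<Rightarrow>
   (complex \<Rightarrow> 'v \<Rightarrow> 'v::ab_group_add) \<Rightarrow> ('g \<Rightarrow> 'v \<Rightarrow> 'v) \<Rightarrow> ('g, 'v) ctensor \<Rightarrow> bool" where
  "ctensor_invariant sg br G chi lam sv act z \<longleftrightarrow>
     (\<forall>x n. tensor_zero sg br G chi lam sv (ctensor_act G act x z n))"

text \<open>z \<in> v_lambda (x) w + (U n_-)_{<0} v_lambda check-tensor V:
the degree-0 component of z equals v_lambda (x) w (the components of degree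
-n, n > 0, lie in M_{-n} (x) V by well-formedness).\<close>

definition ctensor_leading ::
  "(complex \<Rightarrow> 'g \<Rightarrow> 'g) \<Rightarrow> ('g \<Rightarrow> 'g \<Rightarrow> 'g::ab_group_add) \<Rightarrow> (int \<Rightarrow> 'g set) \<Rightarrow> ('g \<Rightarrow> complex) \<Rightarrow> complex \<Rightarrow>
   (complex \<Rightarrow> 'v \<Rightarrow> 'v::ab_group_add) \<Rightarrow> 'v \<Rightarrow> ('g, 'v) ctensor \<Rightarrow> bool" where
  "ctensor_leading sg br G chi lam sv w z \<longleftrightarrow>
     tensor_zero sg br G chi lam sv (z 0 @ [(fa_one, - w)])"

definition ctensor_eq ::
  "(complex \<Rightarrow> 'g \<Rightarrow> 'g) \<Rightarrow> ('g \<Rightarrow> 'g \<Rightarrow> 'g::ab_group_add) \<Rightarrow> (int \<Rightarrow> 'g set) \<Rightarrow> ('g \<Rightarrow> complex) \<Rightarrow> complex \<Rightarrow>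
   (complex \<Rightarrow> 'v \<Rightarrow> 'v::ab_group_add) \<Rightarrow> ('g, 'v) ctensor \<Rightarrow> ('g, 'v) ctensor \<Rightarrow> bool" where
  "ctensor_eq sg br G chi lam sv z z' \<longleftrightarrow>
     (\<forall>n. tensor_zero sg br G chi lam sv (z n @ map (\<lambda>(m, v). (m, - v)) (z' n)))"

end

theory Submission
  imports Defs "HOL-Library.Function_Algebras"
begin
section \<open>Free algebra basics\<close>

lemmas fun_apply_simps = plus_fun_apply zero_fun_apply minus_apply uminus_apply

declare plus_fun_apply[simp del] zero_fun_apply[simp del] minus_apply[simp del] uminus_apply[simp del]

lemma fa_add_eq: "fa_add a b = a + b" by (simp add: fa_add_def fun_eq_iff fun_apply_simps)
lemma fa_zero_eq: "fa_zero = 0" by (simp add: fa_zero_def fun_eq_iff fun_apply_simps)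
lemma fa_diff_eq: "fa_diff a b = a - b" by (simp add: fa_diff_def fun_eq_iff fun_apply_simps)

lemma fa_smul_add: "fa_smul c (a + b) = fa_smul c a + fa_smul c b"
  by (simp add: fa_smul_def fun_eq_iff fun_apply_simps algebra_simps)
lemma fa_smul_diff: "fa_smul c (a - b) = fa_smul c a - fa_smul c b"
  by (simp add: fa_smul_def fun_eq_iff fun_apply_simps algebra_simps)
lemma fa_smul_zero[simp]: "fa_smul c 0 = 0"
  by (simp add: fa_smul_def fun_eq_iff fun_apply_simps)
lemma fa_smul_0[simp]: "fa_smul 0 a = 0"
  by (simp add: fa_smul_def fun_eq_iff fun_apply_simps)
lemma fa_smul_1[simp]: "fa_smul 1 a = a"
  by (simp add: fa_smul_def fun_eq_iff fun_apply_simps)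
lemma fa_smul_smul: "fa_smul c (fa_smul d a) = fa_smul (c * d) a"
  by (simp add: fa_smul_def fun_eq_iff fun_apply_simps)
lemma fa_smul_minus: "fa_smul (-1) a = - a"
  by (simp add: fa_smul_def fun_eq_iff fun_apply_simps)
lemma fa_smul_add_left: "fa_smul (c + d) a = fa_smul c a + fa_smul d a"
  by (simp add: fa_smul_def fun_eq_iff fun_apply_simps algebra_simps)
lemma sum_fun_apply: "sum f S w = (\<Sum>i\<in>S. f i w)"
  by (induction S rule: infinite_finite_induct) (auto simp: fun_apply_simps)
lemma fa_smul_sum: "fa_smul c (sum f S) = (\<Sum>i\<in>S. fa_smul c (f i))"
  by (simp add: fun_eq_iff fun_apply_simps sum_fun_apply fa_smul_def sum_distrib_left)

lemma fin_zero[simp]: "fa_fin 0" by (simp add: fa_fin_def fun_apply_simps)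
lemma fin_add[simp]: "fa_fin a \<Longrightarrow> fa_fin b \<Longrightarrow> fa_fin (a + b)"
  unfolding fa_fin_def
  by (rule finite_subset[of _ "{w. a w \<noteq> 0} \<union> {w. b w \<noteq> 0}"]) (auto simp: fun_apply_simps)
lemma fin_smul[simp]: "fa_fin a \<Longrightarrow> fa_fin (fa_smul c a)"
  unfolding fa_fin_def fa_smul_def
  by (rule finite_subset[of _ "{w. a w \<noteq> 0}"]) auto
lemma fin_uminus[simp]: "fa_fin a \<Longrightarrow> fa_fin (- a)"
  unfolding fa_fin_def by (simp add: fun_apply_simps)
lemma fin_diff[simp]: "fa_fin a \<Longrightarrow> fa_fin b \<Longrightarrow> fa_fin (a - b)"
  using fin_add[of a "-b"] by simp
lemma fin_word[simp]: "fa_fin (fa_word u)"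
  unfolding fa_fin_def fa_word_def
  by (rule finite_subset[of _ "{u}"]) auto
lemma fin_one[simp]: "fa_fin fa_one" by (simp add: fa_one_def)
lemma fin_gen[simp]: "fa_fin (fa_gen x)" by (simp add: fa_gen_def)
lemma fin_sum[simp]: "(\<And>i. i \<in> S \<Longrightarrow> fa_fin (f i)) \<Longrightarrow> fa_fin (sum f S)"
  by (induction S rule: infinite_finite_induct) (simp_all add: fin_add)


lemma fin_mul[simp]:
  assumes "fa_fin a" "fa_fin b" shows "fa_fin (fa_mul a b)"
proof -
  have "{w. fa_mul a b w \<noteq> 0} \<subseteq> (\<lambda>(u, v). u @ v) ` ({u. a u \<noteq> 0} \<times> {v. b v \<noteq> 0})"
  proof
    fix w assume "w \<in> {w. fa_mul a b w \<noteq> 0}"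
    then have "(\<Sum>k\<le>length w. a (take k w) * b (drop k w)) \<noteq> 0"
      unfolding fa_mul_def by simp
    then obtain k where "a (take k w) * b (drop k w) \<noteq> 0"
      by (meson sum.neutral)
    then have "(take k w, drop k w) \<in> {u. a u \<noteq> 0} \<times> {v. b v \<noteq> 0}" by simp
    then show "w \<in> (\<lambda>(u, v). u @ v) ` ({u. a u \<noteq> 0} \<times> {v. b v \<noteq> 0})"
      by (rule rev_image_eqI) simp
  qed
  moreover have "finite ((\<lambda>(u, v). u @ v) ` ({u. a u \<noteq> 0} \<times> {v. b v \<noteq> 0}))"
    using assms unfolding fa_fin_def by simp
  ultimately show ?thesis unfolding fa_fin_def
    by (rule finite_subset)
qed

lemma mul_add_left: "fa_mul (a + b) c = fa_mul a c + fa_mul b c"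
  by (simp add: fa_mul_def fun_eq_iff fun_apply_simps algebra_simps sum.distrib)
lemma mul_add_right: "fa_mul a (b + c) = fa_mul a b + fa_mul a c"
  by (simp add: fa_mul_def fun_eq_iff fun_apply_simps algebra_simps sum.distrib)
lemma mul_zero_left[simp]: "fa_mul 0 c = 0"
  by (simp add: fa_mul_def fun_eq_iff fun_apply_simps)
lemma mul_zero_right[simp]: "fa_mul c 0 = 0"
  by (simp add: fa_mul_def fun_eq_iff fun_apply_simps)
lemma mul_smul_left: "fa_mul (fa_smul k a) c = fa_smul k (fa_mul a c)"
  by (simp add: fa_mul_def fa_smul_def fun_eq_iff fun_apply_simps algebra_simps sum_distrib_left)
lemma mul_smul_right: "fa_mul a (fa_smul k c) = fa_smul k (fa_mul a c)"
  by (simp add: fa_mul_def fa_smul_def fun_eq_iff fun_apply_simps algebra_simps sum_distrib_left)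
lemma mul_uminus_left: "fa_mul (- a) c = - fa_mul a c"
  by (simp add: fa_mul_def fun_eq_iff fun_apply_simps sum_negf)
lemma mul_uminus_right: "fa_mul a (- c) = - fa_mul a c"
  by (simp add: fa_mul_def fun_eq_iff fun_apply_simps sum_negf)
lemma mul_diff_left: "fa_mul (a - b) c = fa_mul a c - fa_mul b c"
  using mul_add_left[of a "-b" c] by (simp add: mul_uminus_left)
lemma mul_diff_right: "fa_mul a (b - c) = fa_mul a b - fa_mul a c"
  using mul_add_right[of a b "-c"] by (simp add: mul_uminus_right)
lemma mul_sum_left: "fa_mul (sum f S) c = (\<Sum>i\<in>S. fa_mul (f i) c)"
proof
  fix w show "fa_mul (sum f S) c w = (\<Sum>i\<in>S. fa_mul (f i) c) w"
    unfolding fa_mul_def sum_fun_apply sum_distrib_right by (rule sum.swap)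
qed


lemma take_drop_split_iff:
  assumes "w = u @ v" "k \<le> length w"
  shows "(take k w = u \<and> drop k w = v) = (k = length u)"
proof
  assume "take k w = u \<and> drop k w = v"
  then have "length (take k w) = length u" by simp
  then show "k = length u" using assms by simp
qed (use assms in simp)

lemma mul_word: "fa_mul (fa_word u) (fa_word v) = fa_word (u @ v)"
proof
  fix w
  show "fa_mul (fa_word u) (fa_word v) w = fa_word (u @ v) w"
  proof (cases "w = u @ v")
    case True
    have "fa_mul (fa_word u) (fa_word v) w =
      (\<Sum>k\<le>length w. if k = length u then 1 else 0)"
      unfolding fa_mul_def fa_word_def using True
    proof (intro sum.cong refl)
      fix k assume "k \<in> {..length w}"
      then show "(if take k w = u then 1 else 0) * (if drop k w = v then 1 else 0) =
          (if k = length u then 1 else (0::complex))"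
        using take_drop_split_iff[OF True, of k] by auto
    qed
    then show ?thesis using True by (simp add: fa_word_def)
  next
    case False
    have "fa_mul (fa_word u) (fa_word v) w = (\<Sum>k\<le>length w. 0)"
      unfolding fa_mul_def fa_word_def
    proof (intro sum.cong refl)
      fix k assume "k \<in> {..length w}"
      have "\<not> (take k w = u \<and> drop k w = v)"
        using False append_take_drop_id[of k w] by metis
      then show "(if take k w = u then 1 else 0) * (if drop k w = v then 1 else 0) = (0::complex)"
        by auto
    qed
    then show ?thesis using False by (simp add: fa_word_def)
  qed
qed

lemma mul_one_left[simp]: "fa_mul fa_one a = a"
proof
  fix w
  have "fa_mul fa_one a w = (\<Sum>k\<le>length w. if k = 0 then a w else 0)"
    unfolding fa_mul_def fa_one_def fa_word_def
    by (intro sum.cong) auto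
  then show "fa_mul fa_one a w = a w" by simp
qed

lemma mul_one_right[simp]: "fa_mul a fa_one = a"
proof
  fix w
  have "fa_mul a fa_one w = (\<Sum>k\<le>length w. if k = length w then a w else 0)"
    unfolding fa_mul_def fa_one_def fa_word_def
    by (intro sum.cong) auto
  then show "fa_mul a fa_one w = a w" by simp
qed

lemma mul_assoc:
  fixes a b c :: "'a fa"
  shows "fa_mul (fa_mul a b) c = fa_mul a (fa_mul b c)"
proof
  fix w :: "'a list"
  define n where "n = length w"
  define F where "F j k = a (take j w) * b (take (k - j) (drop j w)) * c (drop k w)" for j k
  have td: "j \<le> k \<Longrightarrow> drop j (take k w) = take (k - j) (drop j w)" for j k
    by (simp add: take_drop)
  have "fa_mul (fa_mul a b) c w = (\<Sum>k\<le>n. \<Sum>j\<le>k. F j k)"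
    unfolding fa_mul_def F_def n_def
  proof (rule sum.cong[OF refl])
    fix k assume k: "k \<in> {..length w}"
    have "(\<Sum>j\<le>k. a (take j (take k w)) * b (drop j (take k w))) * c (drop k w)
       = (\<Sum>j\<le>k. a (take j (take k w)) * b (drop j (take k w)) * c (drop k w))"
      by (simp add: sum_distrib_right)
    also have "\<dots> = (\<Sum>j\<le>k. a (take j w) * b (take (k - j) (drop j w)) * c (drop k w))"
      by (rule sum.cong[OF refl]) (simp add: td min_def)
    moreover have L: "length (take k w) = k" using k by simp
    ultimately show "(\<Sum>j\<le>length (take k w). a (take j (take k w)) * b (drop j (take k w))) * c (drop k w)
       = (\<Sum>j\<le>k. a (take j w) * b (take (k - j) (drop j w)) * c (drop k w))"
      by (simp only: L)
  qed
  also have "\<dots> = (\<Sum>j\<le>n. \<Sum>k\<in>{j..n}. F j k)"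
  proof -
    have e1: "k \<in> {..n} \<Longrightarrow> {..k} = {j. j \<in> {..n} \<and> j \<le> k}" for k by auto
    have e2: "j \<in> {..n} \<Longrightarrow> {j..n} = {k. k \<in> {..n} \<and> j \<le> k}" for j by auto
    have "(\<Sum>k\<le>n. \<Sum>j\<le>k. F j k) = (\<Sum>k\<in>{..n}. \<Sum>j\<in>{j. j \<in> {..n} \<and> j \<le> k}. F j k)"
      by (rule sum.cong[OF refl]) (simp only: e1)
    also have "\<dots> = (\<Sum>j\<in>{..n}. \<Sum>k\<in>{k. k \<in> {..n} \<and> j \<le> k}. F j k)"
      by (rule sum.swap_restrict) auto
    also have "\<dots> = (\<Sum>j\<le>n. \<Sum>k\<in>{j..n}. F j k)"
      by (rule sum.cong[OF refl]) (simp only: e2)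
    finally show ?thesis .
  qed
  also have "\<dots> = (\<Sum>j\<le>n. \<Sum>l\<le>n - j. F j (j + l))"
  proof (rule sum.cong[OF refl])
    fix j assume j: "j \<in> {..n}"
    have "{j..n} = {0 + j..(n - j) + j}" using j by simp
    then have "(\<Sum>k\<in>{j..n}. F j k) = (\<Sum>l\<in>{0..n - j}. F j (l + j))"
      by (simp only: sum.shift_bounds_cl_nat_ivl)
    then show "(\<Sum>k\<in>{j..n}. F j k) = (\<Sum>l\<le>n - j. F j (j + l))"
      by (simp add: atLeast0AtMost add.commute)
  qed
  also have "\<dots> = fa_mul a (fa_mul b c) w"
    unfolding fa_mul_def F_def n_def
    by (rule sum.cong[OF refl]) (simp add: sum_distrib_left mult.assoc add.commute)
  finally show "fa_mul (fa_mul a b) c w = fa_mul a (fa_mul b c) w" .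
qed

lemma word_Cons: "fa_word (x # u) = fa_mul (fa_gen x) (fa_word u)"
  by (simp add: fa_gen_def mul_word)

locale gla =
  fixes sg :: "complex \<Rightarrow> 'g \<Rightarrow> 'g::ab_group_add"
    and br :: "'g \<Rightarrow> 'g \<Rightarrow> 'g"
    and G :: "int \<Rightarrow> 'g set"
  assumes gla: "graded_lie_algebra sg br G"
begin

lemma vs: "vector_space sg"
  using gla unfolding graded_lie_algebra_def lie_algebra_def by blast

interpretation V: vector_space sg by (rule vs)

lemma br_add_left: "br (x + y) z = br x z + br y z"
  using gla unfolding graded_lie_algebra_def lie_algebra_def by simp
lemma br_add_right: "br x (y + z) = br x y + br x z"
  using gla unfolding graded_lie_algebra_def lie_algebra_def by simp
lemma br_smul_left: "br (sg c x) y = sg c (br x y)"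
  using gla unfolding graded_lie_algebra_def lie_algebra_def by simp
lemma br_smul_right: "br x (sg c y) = sg c (br x y)"
  using gla unfolding graded_lie_algebra_def lie_algebra_def by simp

lemma G_sub: "V.subspace (G i)"
  using gla unfolding graded_lie_algebra_def by blast

lemma G_zero[simp]: "0 \<in> G i" using V.subspace_0[OF G_sub] .
lemma G_add: "x \<in> G i \<Longrightarrow> y \<in> G i \<Longrightarrow> x + y \<in> G i" using V.subspace_add[OF G_sub] .
lemma G_smul: "x \<in> G i \<Longrightarrow> sg c x \<in> G i" using V.subspace_scale[OF G_sub] .
lemma G_br: "x \<in> G i \<Longrightarrow> y \<in> G j \<Longrightarrow> br x y \<in> G (i + j)"
  using gla unfolding graded_lie_algebra_def by blast

lemma br_sum_left: "br (sum f S) y = (\<Sum>i\<in>S. br (f i) y)"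
proof -
  interpret additive "\<lambda>x. br x y" by standard (rule br_add_left)
  show ?thesis by (rule sum)
qed
lemma br_sum_right: "br y (sum f S) = (\<Sum>i\<in>S. br y (f i))"
proof -
  interpret additive "\<lambda>x. br y x" by standard (rule br_add_right)
  show ?thesis by (rule sum)
qed

definition P where "P x f \<longleftrightarrow> finite {i. f i \<noteq> 0} \<and> (\<forall>i. f i \<in> G i) \<and> x = (\<Sum>i\<in>{i. f i \<noteq> 0}. f i)"

lemma ex1P: "\<exists>!f. P x f"
  using gla unfolding graded_lie_algebra_def P_def by blast

lemma gpr_eq: "gpr G i x = (THE f. P x f) i"
  unfolding gpr_def P_def by simp

lemma P_gpr: "P x (\<lambda>i. gpr G i x)"
proof -
  have "P x (THE f. P x f)" by (rule theI'[OF ex1P])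
  moreover have "(\<lambda>i. gpr G i x) = (THE f. P x f)" by (simp add: gpr_eq fun_eq_iff fun_apply_simps)
  ultimately show ?thesis by simp
qed

lemma gpr_in[simp]: "gpr G i x \<in> G i"
  using P_gpr[of x] unfolding P_def by blast

lemma gpr_fin[simp]: "finite {i. gpr G i x \<noteq> 0}"
  using P_gpr[of x] unfolding P_def by blast

lemma gpr_sum: "x = (\<Sum>i\<in>{i. gpr G i x \<noteq> 0}. gpr G i x)"
  using P_gpr[of x] unfolding P_def by blast

lemma gpr_sum_S: "finite S \<Longrightarrow> {i. gpr G i x \<noteq> 0} \<subseteq> S \<Longrightarrow> x = (\<Sum>i\<in>S. gpr G i x)"
proof -
  assume a: "finite S" "{i. gpr G i x \<noteq> 0} \<subseteq> S"
  have "(\<Sum>i\<in>S. gpr G i x) = (\<Sum>i\<in>{i. gpr G i x \<noteq> 0}. gpr G i x)"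
    by (rule sum.mono_neutral_right[OF a]) blast
  then show ?thesis using gpr_sum[of x] by simp
qed

lemma gpr_unique:
  assumes "finite S" "\<And>i. f i \<in> G i" "\<And>i. i \<notin> S \<Longrightarrow> f i = 0" "x = (\<Sum>i\<in>S. f i)"
  shows "gpr G i x = f i"
proof -
  have sub: "{i. f i \<noteq> 0} \<subseteq> S" using assms(3) by blast
  have "P x f" unfolding P_def
  proof (intro conjI)
    show "finite {i. f i \<noteq> 0}" using sub assms(1) by (rule finite_subset)
    show "\<forall>i. f i \<in> G i" using assms(2) by blast
    show "x = (\<Sum>i\<in>{i. f i \<noteq> 0}. f i)"
      using assms(4) sum.mono_neutral_right[OF assms(1) sub] by auto
  qed
  then have "(THE f. P x f) = f" by (rule the1_equality[OF ex1P])
  then show ?thesis by (simp add: gpr_eq)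
qed

lemma gpr_ext: "(\<And>i. gpr G i x = gpr G i y) \<Longrightarrow> x = y"
  using gpr_sum[of x] gpr_sum[of y] by simp

lemma gpr_add: "gpr G i (x + y) = gpr G i x + gpr G i y"
proof (rule gpr_unique[where S="{i. gpr G i x \<noteq> 0} \<union> {i. gpr G i y \<noteq> 0}"])
  show "finite ({i. gpr G i x \<noteq> 0} \<union> {i. gpr G i y \<noteq> 0})" by simp
  show "gpr G i x + gpr G i y \<in> G i" for i by (simp add: G_add)
  show "i \<notin> {i. gpr G i x \<noteq> 0} \<union> {i. gpr G i y \<noteq> 0} \<Longrightarrow> gpr G i x + gpr G i y = 0" for i by simp
  show "x + y = (\<Sum>i\<in>{i. gpr G i x \<noteq> 0} \<union> {i. gpr G i y \<noteq> 0}. gpr G i x + gpr G i y)"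
    by (simp add: sum.distrib flip: gpr_sum_S)
qed

lemma gpr_smul: "gpr G i (sg c x) = sg c (gpr G i x)"
proof (rule gpr_unique[where S="{i. gpr G i x \<noteq> 0}"])
  have "sg c x = sg c (\<Sum>i\<in>{i. gpr G i x \<noteq> 0}. gpr G i x)"
    by (rule arg_cong[OF gpr_sum])
  also have "\<dots> = (\<Sum>i\<in>{i. gpr G i x \<noteq> 0}. sg c (gpr G i x))"
    by (rule V.scale_sum_right)
  finally show "sg c x = (\<Sum>i\<in>{i. gpr G i x \<noteq> 0}. sg c (gpr G i x))" .
qed (auto simp: G_smul)

lemma gpr_hom: "y \<in> G d \<Longrightarrow> gpr G i y = (if i = d then y else 0)"
  by (rule gpr_unique[where S="{d}"]) auto

lemma gpr_zero[simp]: "gpr G i 0 = 0"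
  using gpr_hom[OF G_zero[of 0]] by simp

lemma gpr_summ: "finite S \<Longrightarrow> gpr G i (sum f S) = (\<Sum>j\<in>S. gpr G i (f j))"
  by (induction S rule: finite_induct) (simp_all add: gpr_add)

definition sig :: "complex \<Rightarrow> 'g \<Rightarrow> 'g" where
  "sig t x = (\<Sum>i\<in>{i. gpr G i x \<noteq> 0}. sg (t powi i) (gpr G i x))"

lemma gpr_sig: "gpr G i (sig t x) = sg (t powi i) (gpr G i x)"
  unfolding sig_def by (rule gpr_unique[where S="{i. gpr G i x \<noteq> 0}"]) (auto simp: G_smul)

lemma sig_add: "sig t (x + y) = sig t x + sig t y"
  by (rule gpr_ext) (simp add: gpr_sig gpr_add V.scale_right_distrib)

lemma sig_smul: "sig t (sg c x) = sg c (sig t x)"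
  by (rule gpr_ext) (simp add: gpr_sig gpr_smul mult.commute)

lemma sig_hom: "y \<in> G d \<Longrightarrow> sig t y = sg (t powi d) y"
  by (rule gpr_ext) (simp add: gpr_sig gpr_smul gpr_hom)

lemma sig_zero[simp]: "sig t 0 = 0"
  using sig_add[of t 0 0] by simp

lemma sig_sum: "sig t (sum f S) = (\<Sum>i\<in>S. sig t (f i))"
proof -
  interpret additive "sig t" by standard (rule sig_add)
  show ?thesis by (rule sum)
qed

lemma sig_br: assumes t: "t \<noteq> 0" shows "sig t (br x y) = br (sig t x) (sig t y)"
proof -
  define Sx where "Sx = {i. gpr G i x \<noteq> 0}"
  define Sy where "Sy = {i. gpr G i y \<noteq> 0}"
  have x: "x = (\<Sum>i\<in>Sx. gpr G i x)" unfolding Sx_def by (rule gpr_sum)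
  have y: "y = (\<Sum>j\<in>Sy. gpr G j y)" unfolding Sy_def by (rule gpr_sum)
  have "br x y = br (\<Sum>i\<in>Sx. gpr G i x) (\<Sum>j\<in>Sy. gpr G j y)"
    using x y by simp
  also have "\<dots> = (\<Sum>i\<in>Sx. \<Sum>j\<in>Sy. br (gpr G i x) (gpr G j y))"
    unfolding br_sum_left unfolding br_sum_right ..
  finally have "sig t (br x y) = sig t (\<Sum>i\<in>Sx. \<Sum>j\<in>Sy. br (gpr G i x) (gpr G j y))"
    by simp
  also have "\<dots> = (\<Sum>i\<in>Sx. \<Sum>j\<in>Sy. sig t (br (gpr G i x) (gpr G j y)))"
    by (simp add: sig_sum)
  also have "\<dots> = (\<Sum>i\<in>Sx. \<Sum>j\<in>Sy. br (sig t (gpr G i x)) (sig t (gpr G j y)))"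
  proof (intro sum.cong refl)
    fix i j
    have "sig t (br (gpr G i x) (gpr G j y)) = sg (t powi (i + j)) (br (gpr G i x) (gpr G j y))"
      by (rule sig_hom) (simp add: G_br)
    also have "\<dots> = br (sig t (gpr G i x)) (sig t (gpr G j y))"
      by (simp add: sig_hom[OF gpr_in] br_smul_left br_smul_right power_int_add[OF disjI1[OF t]])
    finally show "sig t (br (gpr G i x) (gpr G j y)) = br (sig t (gpr G i x)) (sig t (gpr G j y))" .
  qed
  also have "\<dots> = br (sig t (\<Sum>i\<in>Sx. gpr G i x)) (sig t (\<Sum>j\<in>Sy. gpr G j y))"
    unfolding sig_sum unfolding br_sum_left unfolding br_sum_right ..
  finally show ?thesis using x y by simp
qed

lemma sig_inv: "t \<noteq> 0 \<Longrightarrow> sig (inverse t) (sig t x) = x"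
  by (rule gpr_ext) (simp add: gpr_sig power_int_inverse field_simps)

lemma gpr_sig0: "gpr G 0 (sig t x) = gpr G 0 x"
  by (simp add: gpr_sig)

lemma sig_pplus: "x \<in> pplus G \<Longrightarrow> sig t x \<in> pplus G"
  unfolding pplus_def by (simp add: gpr_sig)

lemma pplus_hom: "x \<in> G i \<Longrightarrow> 0 \<le> i \<Longrightarrow> x \<in> pplus G"
  unfolding pplus_def by (simp add: gpr_hom)

end

lemmas fin_I = fin_add fin_diff fin_smul fin_mul fin_gen fin_word fin_one fin_zero fin_uminus fin_sum

lemma ug_fin: "a \<in> ug_ideal sg br \<Longrightarrow> fa_fin a"
  by (induction rule: ug_ideal.induct)
     (simp_all only: fa_diff_eq fa_add_eq fa_zero_eq, (intro fin_I; assumption)+)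

lemma ug_add': "a \<in> ug_ideal sg br \<Longrightarrow> b \<in> ug_ideal sg br \<Longrightarrow> a + b \<in> ug_ideal sg br"
  using ug_add[of a sg br b] by (simp add: fa_add_eq)
lemma ug_smul': "a \<in> ug_ideal sg br \<Longrightarrow> fa_smul c a \<in> ug_ideal sg br"
  by (rule ug_smul)
lemma ug_uminus: "a \<in> ug_ideal sg br \<Longrightarrow> - a \<in> ug_ideal sg br"
  using ug_smul[of a sg br "-1"] by (simp add: fa_smul_minus)
lemma ug_diff: "a \<in> ug_ideal sg br \<Longrightarrow> b \<in> ug_ideal sg br \<Longrightarrow> a - b \<in> ug_ideal sg br"
  using ug_add'[of a sg br "-b"] ug_uminus[of b sg br] by (simp only: diff_conv_add_uminus)
lemma ug_zero': "0 \<in> ug_ideal sg br"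
  using ug_zero by (simp add: fa_zero_eq)
lemma ug_sum: "(\<And>i. i \<in> S \<Longrightarrow> f i \<in> ug_ideal sg br) \<Longrightarrow> sum f S \<in> ug_ideal sg br"
  by (induction S rule: infinite_finite_induct) (simp_all add: ug_zero' ug_add')
lemma ug_lmul': "a \<in> ug_ideal sg br \<Longrightarrow> fa_fin p \<Longrightarrow> fa_mul p a \<in> ug_ideal sg br"
  by (rule ug_lmul)
lemma ug_rmul': "a \<in> ug_ideal sg br \<Longrightarrow> fa_fin p \<Longrightarrow> fa_mul a p \<in> ug_ideal sg br"
  by (rule ug_rmul)

lemma ug_gen_add: "fa_gen (x + y) - (fa_gen x + fa_gen y) \<in> ug_ideal sg br"
  using ug_add_gen[of x y sg br] by (simp add: fa_add_eq fa_diff_eq)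
lemma ug_gen_smul: "fa_gen (sg c x) - fa_smul c (fa_gen x) \<in> ug_ideal sg br"
  using ug_smul_gen[of sg c x br] by (simp add: fa_diff_eq)
lemma ug_gen_comm: "fa_mul (fa_gen x) (fa_gen y) - fa_mul (fa_gen y) (fa_gen x) - fa_gen (br x y) \<in> ug_ideal sg br"
  using ug_comm[of x y br sg] by (simp add: fa_diff_eq)
lemma ug_gen_zero: "fa_gen 0 \<in> ug_ideal sg br"
  using ug_uminus[OF ug_gen_add[of 0 0 sg br]] by simp

lemma ug_gen_sum:
  "finite S \<Longrightarrow> fa_gen (sum f S) - (\<Sum>i\<in>S. fa_gen (f i)) \<in> ug_ideal sg br"
proof (induction S rule: finite_induct)
  case empty then show ?case by (simp add: ug_gen_zero)
next
  case (insert a S)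
  have "fa_gen (sum f (insert a S)) - (\<Sum>i\<in>insert a S. fa_gen (f i)) =
     (fa_gen (f a + sum f S) - (fa_gen (f a) + fa_gen (sum f S))) +
     (fa_gen (sum f S) - (\<Sum>i\<in>S. fa_gen (f i)))"
    using insert by (simp add: algebra_simps)
  then show ?case using insert ug_gen_add ug_add' by metis
qed

lemma vi_fin: "a \<in> verma_ideal sg br G chi lam \<Longrightarrow> fa_fin a"
  by (induction rule: verma_ideal.induct)
     (simp_all only: ug_fin fa_diff_eq fa_add_eq, (intro fin_I; assumption)+)

lemma vi_ug': "a \<in> ug_ideal sg br \<Longrightarrow> a \<in> verma_ideal sg br G chi lam"
  by (rule vi_ug)
lemma vi_add': "a \<in> verma_ideal sg br G chi lam \<Longrightarrow> b \<in> verma_ideal sg br G chi lam \<Longrightarrow> a + b \<in> verma_ideal sg br G chi lam"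
  using vi_add[of a sg br G chi lam b] by (simp add: fa_add_eq)
lemma vi_uminus: "a \<in> verma_ideal sg br G chi lam \<Longrightarrow> - a \<in> verma_ideal sg br G chi lam"
  using vi_smul[of a sg br G chi lam "-1"] by (simp add: fa_smul_minus)
lemma vi_diff: "a \<in> verma_ideal sg br G chi lam \<Longrightarrow> b \<in> verma_ideal sg br G chi lam \<Longrightarrow> a - b \<in> verma_ideal sg br G chi lam"
  using vi_add'[of a sg br G chi lam "-b"] vi_uminus[of b sg br G chi lam] by (simp only: diff_conv_add_uminus)
lemma vi_zero': "0 \<in> verma_ideal sg br G chi lam"
  using vi_ug'[OF ug_zero'] .
lemma vi_par': "x \<in> pplus G \<Longrightarrow> fa_gen x - fa_smul (lam * chi (gpr G 0 x)) fa_one \<in> verma_ideal sg br G chi lam"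
  using vi_par[of x G lam chi sg br] by (simp only: fa_diff_eq)

section \<open>The scaling automorphism\<close>

context gla begin

interpretation V: vector_space sg by (rule vs)

definition Aop :: "'g fa \<Rightarrow> 'g fa" where
  "Aop a = (\<lambda>w. a (map (sig (1/2)) w))"

lemma sig2_inv: "sig (1/2) (sig 2 x) = x" using sig_inv[of 2 x] by (simp add: inverse_eq_divide)
lemma sig2_inv': "sig 2 (sig (1/2) x) = x" using sig_inv[of "1/2" x] by (simp add: inverse_eq_divide)

lemma map_sig_iff: "map (sig (1/2)) w = u \<longleftrightarrow> w = map (sig 2) u"
proof
  assume "map (sig (1/2)) w = u"
  then have "map (sig 2) u = map (sig 2) (map (sig (1/2)) w)" by simp
  also have "\<dots> = w" by (induction w) (simp_all add: sig2_inv')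
  finally show "w = map (sig 2) u" by simp
next
  assume "w = map (sig 2) u"
  then show "map (sig (1/2)) w = u" by (induction u arbitrary: w) (simp_all add: sig2_inv)
qed

lemma Aop_add: "Aop (a + b) = Aop a + Aop b" by (simp add: Aop_def fun_eq_iff fun_apply_simps)
lemma Aop_diff: "Aop (a - b) = Aop a - Aop b" by (simp add: Aop_def fun_eq_iff fun_apply_simps)
lemma Aop_zero[simp]: "Aop 0 = 0" by (simp add: Aop_def fun_eq_iff fun_apply_simps)
lemma Aop_smul: "Aop (fa_smul c a) = fa_smul c (Aop a)" by (simp add: Aop_def fa_smul_def fun_eq_iff fun_apply_simps)

lemma Aop_fin: assumes "fa_fin a" shows "fa_fin (Aop a)"
proof -
  have "{w. Aop a w \<noteq> 0} \<subseteq> map (sig 2) ` {u. a u \<noteq> 0}"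
  proof
    fix w assume "w \<in> {w. Aop a w \<noteq> 0}"
    then have "a (map (sig (1/2)) w) \<noteq> 0" by (simp add: Aop_def)
    moreover have "w = map (sig 2) (map (sig (1/2)) w)" using map_sig_iff by blast
    ultimately show "w \<in> map (sig 2) ` {u. a u \<noteq> 0}" by blast
  qed
  moreover have "finite (map (sig 2) ` {u. a u \<noteq> 0})" using assms unfolding fa_fin_def by simp
  ultimately show ?thesis unfolding fa_fin_def by (rule finite_subset)
qed

lemma Aop_mul: "Aop (fa_mul p q) = fa_mul (Aop p) (Aop q)"
  by (simp add: Aop_def fa_mul_def fun_eq_iff fun_apply_simps take_map drop_map)

lemma Aop_word: "Aop (fa_word u) = fa_word (map (sig 2) u)"
  unfolding Aop_def fa_word_def by (rule ext) (simp only: map_sig_iff)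

lemma Aop_gen: "Aop (fa_gen x) = fa_gen (sig 2 x)"
  by (simp add: fa_gen_def Aop_word)

lemma Aop_one[simp]: "Aop fa_one = fa_one"
  by (simp add: fa_one_def Aop_word)

lemma sig2_br: "sig 2 (br x y) = br (sig 2 x) (sig 2 y)" by (rule sig_br) simp

lemma Aop_ug: "a \<in> ug_ideal sg br \<Longrightarrow> Aop a \<in> ug_ideal sg br"
proof (induction rule: ug_ideal.induct)
  case (ug_add_gen x y)
  show ?case using ug_ideal.ug_add_gen[of "sig 2 x" "sig 2 y" sg br]
    by (simp only: fa_diff_eq fa_add_eq Aop_diff Aop_add Aop_gen sig_add)
next
  case (ug_smul_gen c x)
  show ?case using ug_ideal.ug_smul_gen[of sg c "sig 2 x" br]
    by (simp only: fa_diff_eq Aop_diff Aop_smul Aop_gen sig_smul)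
next
  case (ug_comm x y)
  show ?case using ug_ideal.ug_comm[of "sig 2 x" "sig 2 y" br sg]
    by (simp only: fa_diff_eq Aop_diff Aop_mul Aop_gen sig2_br)
next
  case ug_zero
  show ?case by (simp only: fa_zero_eq Aop_zero ug_zero')
next
  case (ug_add a b)
  then show ?case by (simp only: fa_add_eq Aop_add ug_add')
next
  case (ug_smul a c)
  then show ?case by (simp only: Aop_smul ug_smul')
next
  case (ug_lmul a p)
  then show ?case by (simp only: Aop_mul ug_lmul' Aop_fin)
next
  case (ug_rmul a p)
  then show ?case by (simp only: Aop_mul ug_rmul' Aop_fin)
qed

end

locale verma = gla sg br G
  for sg :: "complex \<Rightarrow> 'g \<Rightarrow> 'g::ab_group_add"
    and br :: "'g \<Rightarrow> 'g \<Rightarrow> 'g"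
    and G :: "int \<Rightarrow> 'g set" +
  fixes chi :: "'g \<Rightarrow> complex" and lam :: complex
  assumes nsc: "nonsingular_character sg br G chi"
begin

interpretation V: vector_space sg by (rule vs)

abbreviation J where "J \<equiv> verma_ideal sg br G chi lam"
abbreviation UG where "UG \<equiv> ug_ideal sg br"

lemma chi_zero: "chi 0 = 0"
proof -
  have "chi (0 + 0) = chi 0 + chi 0"
    using nsc unfolding nonsingular_character_def by (meson G_zero)
  then show ?thesis by simp
qed

lemma Aop_J: "a \<in> J \<Longrightarrow> Aop a \<in> J"
proof (induction rule: verma_ideal.induct)
  case (vi_ug a)
  then show ?case using Aop_ug vi_ug' by blast
next
  case (vi_par x)
  then have "sig 2 x \<in> pplus G" by (rule sig_pplus)
  then have "fa_gen (sig 2 x) - fa_smul (lam * chi (gpr G 0 (sig 2 x))) fa_one \<in> J"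
    by (rule vi_par')
  then show ?case by (simp only: fa_diff_eq Aop_diff Aop_smul Aop_gen Aop_one gpr_sig0)
next
  case (vi_add a b)
  then show ?case by (simp only: fa_add_eq Aop_add vi_add')
next
  case (vi_smul a c)
  then show ?case by (simp only: Aop_smul verma_ideal.vi_smul)
next
  case (vi_lmul a p)
  then show ?case by (simp only: Aop_mul verma_ideal.vi_lmul Aop_fin)
qed

end

context verma begin

interpretation V: vector_space sg by (rule vs)

abbreviation und where "und n \<equiv> un_minus_deg G n"

definition valid :: "(int \<times> 'g) list \<Rightarrow> bool" where
  "valid ds \<longleftrightarrow> (\<forall>(d, y)\<in>set ds. d < 0 \<and> y \<in> G d)"

definition wd :: "(int \<times> 'g) list \<Rightarrow> 'g fa" where
  "wd ds = fa_word (map snd ds)"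

lemma valid_Nil[simp]: "valid []" by (simp add: valid_def)
lemma valid_Cons[simp]: "valid ((d, y) # ds) \<longleftrightarrow> d < 0 \<and> y \<in> G d \<and> valid ds"
  by (simp add: valid_def)
lemma valid_append[simp]: "valid (xs @ ys) \<longleftrightarrow> valid xs \<and> valid ys"
  by (auto simp: valid_def)

lemma valid_sum_le: "valid ds \<Longrightarrow> sum_list (map fst ds) \<le> 0"
  by (induction ds) (auto simp: valid_def)

lemma wd_Nil[simp]: "wd [] = fa_one" by (simp add: wd_def fa_one_def)
lemma wd_Cons: "wd ((d, y) # ds) = fa_mul (fa_gen y) (wd ds)"
  by (simp add: wd_def word_Cons)
lemma wd_append: "wd (xs @ ys) = fa_mul (wd xs) (wd ys)"
  by (simp add: wd_def mul_word)
lemma wd_fin[simp]: "fa_fin (wd ds)" by (simp add: wd_def)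

lemma und_fin: "e \<in> und n \<Longrightarrow> fa_fin e"
  by (induction rule: un_minus_deg.induct)
     (simp_all only: fa_zero_eq fa_add_eq, (intro fin_I; assumption)+)

lemma und_zero'[simp]: "0 \<in> und n"
  using und_zero[of G n] by (simp only: fa_zero_eq)
lemma und_add': "a \<in> und n \<Longrightarrow> b \<in> und n \<Longrightarrow> a + b \<in> und n"
  using und_add[of a G n b] by (simp only: fa_add_eq)
lemma und_smul': "a \<in> und n \<Longrightarrow> fa_smul c a \<in> und n"
  by (rule und_smul)
lemma und_wd: "valid ds \<Longrightarrow> sum_list (map fst ds) = - int n \<Longrightarrow> wd ds \<in> und n"
  unfolding wd_def valid_def by (rule und_mono)
lemma und_one: "fa_one \<in> und 0"
  using und_wd[of "[]" 0] by simp

lemma und_lmul: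
  assumes "e \<in> und n" "valid ys" "sum_list (map fst ys) = - int r"
  shows "fa_mul (wd ys) e \<in> und (n + r)"
  using assms(1)
proof (induction rule: un_minus_deg.induct)
  case und_zero
  then show ?case by (simp only: fa_zero_eq mul_zero_right und_zero')
next
  case (und_mono ds)
  have "valid ds" using und_mono(1) by (simp add: valid_def)
  then show ?case using und_mono(2) assms(2,3)
    by (simp only: wd_def[symmetric] wd_append[symmetric]) (rule und_wd, simp_all)
next
  case (und_add a b)
  then show ?case by (simp only: fa_add_eq mul_add_right und_add')
next
  case (und_smul a c)
  then show ?case by (simp only: mul_smul_right und_smul')
qed

lemma und_gen:
  assumes "e \<in> und n" "d < 0" "y \<in> G d"
  shows "fa_mul (fa_gen y) e \<in> und (n + nat (- d))"
proof -
  have "wd [(d, y)] = fa_gen y" by (simp add: wd_def fa_gen_def)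
  moreover have "fa_mul (wd [(d, y)]) e \<in> und (n + nat (- d))"
    by (rule und_lmul[OF assms(1)]) (use assms in auto)
  ultimately show ?thesis by simp
qed

lemma UG_sub_J: "a \<in> UG \<Longrightarrow> a \<in> J" by (rule vi_ug')

lemma word_scale:
  assumes "valid ds"
  shows "fa_word (map (sig 2) (map snd ds)) - fa_smul (2 powi sum_list (map fst ds)) (wd ds) \<in> UG"
  using assms
proof (induction ds)
  case Nil
  have eq: "fa_word (map (sig 2) (map snd [])) - fa_smul (2 powi sum_list (map fst [])) (wd []) = 0"
    by (simp add: fa_one_def)
  show ?case unfolding eq by (rule ug_zero')
next
  case (Cons p ds)
  obtain d y where p: "p = (d, y)" by (cases p)
  have d: "d < 0" and y: "y \<in> G d" and v: "valid ds" using Cons.prems p by auto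
  define W where "W = fa_word (map (sig 2) (map snd ds))"
  define c where "c = (2::complex) powi d"
  define C where "C = (2::complex) powi sum_list (map fst ds)"
  have IH: "W - fa_smul C (wd ds) \<in> UG" unfolding W_def C_def by (rule Cons.IH[OF v])
  have sy: "sig 2 y = sg c y" by (simp add: sig_hom[OF y] c_def)
  have pw: "(2::complex) powi sum_list (map fst (p # ds)) = c * C"
    by (simp add: p c_def C_def power_int_add)
  have "fa_word (map (sig 2) (map snd (p # ds))) - fa_smul (c * C) (wd (p # ds))
     = fa_mul (fa_gen (sg c y) - fa_smul c (fa_gen y)) W
       + fa_smul c (fa_mul (fa_gen y) (W - fa_smul C (wd ds)))"
    by (simp add: p W_def sy word_Cons wd_Cons mul_diff_left mul_diff_right mul_smul_left
        mul_smul_right fa_smul_diff fa_smul_smul mult.commute)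
  also have "\<dots> \<in> UG"
    by (intro ug_add' ug_smul' ug_rmul' ug_lmul' ug_gen_smul IH) (simp_all add: W_def)
  finally show ?case by (simp only: pw)
qed

lemma Aop_und:
  assumes "e \<in> und n"
  shows "Aop e - fa_smul (2 powi (- int n)) e \<in> UG"
  using assms
proof (induction rule: un_minus_deg.induct)
  case und_zero
  then show ?case by (simp only: fa_zero_eq Aop_zero fa_smul_zero diff_zero ug_zero')
next
  case (und_mono ds)
  then have v: "valid ds" by (simp add: valid_def)
  have "Aop (fa_word (map snd ds)) - fa_smul (2 powi - int n) (fa_word (map snd ds)) =
    fa_word (map (sig 2) (map snd ds)) - fa_smul (2 powi sum_list (map fst ds)) (wd ds)"
    using und_mono(2) by (simp add: Aop_word wd_def)
  then show ?case using word_scale[OF v] by metis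
next
  case (und_add a b)
  have "Aop (a + b) - fa_smul (2 powi - int n) (a + b) =
     (Aop a - fa_smul (2 powi - int n) a) + (Aop b - fa_smul (2 powi - int n) b)"
    by (simp add: Aop_add fa_smul_add)
  then show ?case using und_add by (simp only: fa_add_eq) (metis ug_add')
next
  case (und_smul a c)
  have "Aop (fa_smul c a) - fa_smul (2 powi - int n) (fa_smul c a) =
     fa_smul c (Aop a - fa_smul (2 powi - int n) a)"
    by (simp add: Aop_smul fa_smul_diff fa_smul_smul mult.commute)
  then show ?case using und_smul by (metis ug_smul')
qed

end

context verma begin

interpretation V: vector_space sg by (rule vs)

lemma J_add: "a \<in> J \<Longrightarrow> b \<in> J \<Longrightarrow> a + b \<in> J" by (rule vi_add')
lemma J_lmul: "a \<in> J \<Longrightarrow> fa_fin p \<Longrightarrow> fa_mul p a \<in> J" by (rule verma_ideal.vi_lmul)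
lemma J_smul: "a \<in> J \<Longrightarrow> fa_smul c a \<in> J" by (rule verma_ideal.vi_smul)

lemma comm_UG:
  assumes "fa_fin R"
  shows "fa_mul (fa_gen x) (fa_mul (fa_gen y) R) - fa_mul (fa_gen y) (fa_mul (fa_gen x) R)
         - fa_mul (fa_gen (br x y)) R \<in> UG"
proof -
  have "fa_mul (fa_gen x) (fa_mul (fa_gen y) R) - fa_mul (fa_gen y) (fa_mul (fa_gen x) R)
         - fa_mul (fa_gen (br x y)) R =
        fa_mul (fa_mul (fa_gen x) (fa_gen y) - fa_mul (fa_gen y) (fa_gen x) - fa_gen (br x y)) R"
    by (simp add: mul_diff_left mul_assoc)
  also have "\<dots> \<in> UG" by (rule ug_rmul'[OF ug_gen_comm assms])
  finally show ?thesis .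
qed

lemma LA_word:
  assumes "x \<in> G i" "0 \<le> i" "valid ds"
  shows "\<exists>e'. fa_mul (fa_gen x) (wd ds) - e' \<in> J \<and>
     (if i \<le> - sum_list (map fst ds) then e' \<in> und (nat (- sum_list (map fst ds) - i)) else e' = 0)"
  using assms
proof (induction ds arbitrary: x i)
  case Nil
  have xp: "x \<in> pplus G" by (rule pplus_hom[OF Nil(1,2)])
  have par: "fa_gen x - fa_smul (lam * chi (gpr G 0 x)) fa_one \<in> J" by (rule vi_par'[OF xp])
  have w0: "fa_mul (fa_gen x) (wd []) = fa_gen x" by simp
  show ?case
  proof (cases "i = 0")
    case True
    have "fa_smul (lam * chi (gpr G 0 x)) fa_one \<in> und 0" by (rule und_smul'[OF und_one])
    then show ?thesis using True unfolding w0
      by (intro exI[of _ "fa_smul (lam * chi (gpr G 0 x)) fa_one"] conjI par) simp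
  next
    case False
    then have "gpr G 0 x = 0" using gpr_hom[OF Nil(1)] by simp
    then have "fa_smul (lam * chi (gpr G 0 x)) fa_one = 0" by (simp add: chi_zero)
    then have "fa_gen x - 0 \<in> J" using par by metis
    then show ?thesis using False Nil(2) unfolding w0 by (intro exI[of _ 0] conjI) simp_all
  qed
next
  case (Cons p ds)
  obtain d y where p: "p = (d, y)" by (cases p)
  have d: "d < 0" and y: "y \<in> G d" and v: "valid ds" using Cons.prems p by auto
  define K' where "K' = - sum_list (map fst ds)"
  have K'0: "0 \<le> K'" using valid_sum_le[OF v] by (simp add: K'_def)
  have K: "- sum_list (map fst (p # ds)) = K' - d" by (simp add: p K'_def)
  define R where "R = wd ds"
  have Rf: "fa_fin R" by (simp add: R_def)
  have w: "wd (p # ds) = fa_mul (fa_gen y) R" by (simp add: p R_def wd_Cons)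
  obtain e1 where e1: "fa_mul (fa_gen x) R - e1 \<in> J"
     and e1c: "if i \<le> K' then e1 \<in> und (nat (K' - i)) else e1 = 0"
    using Cons.IH[OF Cons.prems(1,2) v] unfolding R_def K'_def by blast
  have xy: "br x y \<in> G (i + d)" by (rule G_br[OF Cons.prems(1) y])
  obtain e2 where e2: "fa_mul (fa_gen (br x y)) R - e2 \<in> J"
     and e2c: "if i \<le> K' - d then e2 \<in> und (nat (K' - d - i)) else e2 = 0"
  proof (cases "0 \<le> i + d")
    case True
    obtain e2 where "fa_mul (fa_gen (br x y)) R - e2 \<in> J"
       and c: "if i + d \<le> K' then e2 \<in> und (nat (K' - (i + d))) else e2 = 0"
      using Cons.IH[OF xy True v] unfolding R_def K'_def by blast
    moreover have "(if i \<le> K' - d then e2 \<in> und (nat (K' - d - i)) else e2 = 0)"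
    proof -
      have a: "(i + d \<le> K') = (i \<le> K' - d)" by arith
      have b: "K' - (i + d) = K' - d - i" by arith
      show ?thesis using c unfolding a b .
    qed
    ultimately show ?thesis using that by blast
  next
    case False
    have "wd ((i + d, br x y) # ds) \<in> und (nat (K' - d - i))"
      by (rule und_wd) (use False xy v K'_def K'0 in auto)
    moreover have z: "fa_mul (fa_gen (br x y)) R - wd ((i + d, br x y) # ds) = 0"
      by (simp add: wd_Cons R_def)
    moreover have "i \<le> K' - d" using False K'0 by simp
    moreover have m: "fa_mul (fa_gen (br x y)) R - wd ((i + d, br x y) # ds) \<in> J"
      unfolding z by (rule vi_zero')
    ultimately show ?thesis by (intro that[OF m]) simp
  qed
  define e' where "e' = fa_mul (fa_gen y) e1 + e2"
  have "fa_mul (fa_gen x) (wd (p # ds)) - e' =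
     (fa_mul (fa_gen x) (fa_mul (fa_gen y) R) - fa_mul (fa_gen y) (fa_mul (fa_gen x) R)
         - fa_mul (fa_gen (br x y)) R)
     + fa_mul (fa_gen y) (fa_mul (fa_gen x) R - e1)
     + (fa_mul (fa_gen (br x y)) R - e2)"
    by (simp add: w e'_def mul_diff_right)
  also have "\<dots> \<in> J"
    by (intro J_add J_lmul vi_ug' comm_UG Rf e1 e2 fin_gen)
  finally have mem: "fa_mul (fa_gen x) (wd (p # ds)) - e' \<in> J" .
  have cond: "if i \<le> K' - d then e' \<in> und (nat (K' - d - i)) else e' = 0"
  proof (cases "i \<le> K' - d")
    case True
    have "fa_mul (fa_gen y) e1 \<in> und (nat (K' - d - i))"
    proof (cases "i \<le> K'")
      case True
      then have "e1 \<in> und (nat (K' - i))" using e1c by simp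
      then have "fa_mul (fa_gen y) e1 \<in> und (nat (K' - i) + nat (- d))" by (rule und_gen[OF _ d y])
      moreover have "nat (K' - i) + nat (- d) = nat (K' - d - i)" using True d by simp
      ultimately show ?thesis by simp
    next
      case False
      then show ?thesis using e1c by simp
    qed
    moreover have "e2 \<in> und (nat (K' - d - i))" using e2c True by simp
    ultimately show ?thesis using True by (simp add: e'_def und_add')
  next
    case False
    then show ?thesis using e1c e2c d by (simp add: e'_def)
  qed
  show ?case
  proof (rule exI[of _ e'], rule conjI)
    show "fa_mul (fa_gen x) (wd (p # ds)) - e' \<in> J" by (rule mem)
    show "if i \<le> - sum_list (map fst (p # ds)) then e' \<in> und (nat (- sum_list (map fst (p # ds)) - i)) else e' = 0"
      unfolding K by (rule cond)
  qed
qed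

end

context verma begin

lemma if_und_zero: "if Q then (0::'g fa) \<in> und k else (0::'g fa) = 0"
  by simp

lemma LA:
  assumes x: "x \<in> G i" and i: "0 \<le> i" and e: "e \<in> und n"
  shows "\<exists>e'. fa_mul (fa_gen x) e - e' \<in> J \<and>
     (if i \<le> int n then e' \<in> und (nat (int n - i)) else e' = 0)"
  using e
proof (induction rule: un_minus_deg.induct)
  case und_zero
  have z: "fa_mul (fa_gen x) fa_zero - 0 = 0" by (simp add: fa_zero_eq)
  have "fa_mul (fa_gen x) fa_zero - 0 \<in> J" unfolding z by (rule vi_zero')
  then show ?case by (intro exI[of _ 0] conjI) (assumption, rule if_und_zero)
next
  case (und_mono ds)
  have v: "valid ds" using und_mono(1) by (simp add: valid_def)
  obtain e' where a: "fa_mul (fa_gen x) (wd ds) - e' \<in> J"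
    and b: "if i \<le> - sum_list (map fst ds) then e' \<in> und (nat (- sum_list (map fst ds) - i)) else e' = 0"
    using LA_word[OF x i v] by blast
  have s: "- sum_list (map fst ds) = int n" using und_mono(2) by simp
  show ?case
  proof (rule exI[of _ e'], rule conjI)
    show "fa_mul (fa_gen x) (fa_word (map snd ds)) - e' \<in> J" using a unfolding wd_def .
    show "if i \<le> int n then e' \<in> und (nat (int n - i)) else e' = 0" using b unfolding s .
  qed
next
  case (und_add a b)
  obtain e1 where a1: "fa_mul (fa_gen x) a - e1 \<in> J"
    and b1: "if i \<le> int n then e1 \<in> und (nat (int n - i)) else e1 = 0" using und_add by blast
  obtain e2 where a2: "fa_mul (fa_gen x) b - e2 \<in> J"
    and b2: "if i \<le> int n then e2 \<in> und (nat (int n - i)) else e2 = 0" using und_add by blast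
  have eq: "fa_mul (fa_gen x) (fa_add a b) - (e1 + e2) = (fa_mul (fa_gen x) a - e1) + (fa_mul (fa_gen x) b - e2)"
    by (simp add: fa_add_eq mul_add_right)
  show ?case
  proof (rule exI[of _ "e1 + e2"], rule conjI)
    show "fa_mul (fa_gen x) (fa_add a b) - (e1 + e2) \<in> J" unfolding eq by (rule vi_add'[OF a1 a2])
    show "if i \<le> int n then e1 + e2 \<in> und (nat (int n - i)) else e1 + e2 = 0"
      using b1 b2 by (auto intro: und_add')
  qed
next
  case (und_smul a c)
  obtain e1 where a1: "fa_mul (fa_gen x) a - e1 \<in> J"
    and b1: "if i \<le> int n then e1 \<in> und (nat (int n - i)) else e1 = 0" using und_smul by blast
  have eq: "fa_mul (fa_gen x) (fa_smul c a) - fa_smul c e1 = fa_smul c (fa_mul (fa_gen x) a - e1)"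
    by (simp add: mul_smul_right fa_smul_diff)
  show ?case
  proof (rule exI[of _ "fa_smul c e1"], rule conjI)
    show "fa_mul (fa_gen x) (fa_smul c a) - fa_smul c e1 \<in> J" unfolding eq by (rule J_smul[OF a1])
    show "if i \<le> int n then fa_smul c e1 \<in> und (nat (int n - i)) else fa_smul c e1 = 0"
      using b1 by (auto intro: und_smul')
  qed
qed

lemma LA0:
  assumes "x \<in> G 0" "e \<in> und n"
  obtains e' where "e' \<in> und n" "fa_mul (fa_gen x) e - e' \<in> J"
  using LA[OF assms(1) _ assms(2)] that by auto

lemma LAbig:
  assumes "x \<in> G i" "int n < i" "e \<in> und n"
  shows "fa_mul (fa_gen x) e \<in> J"
proof -
  obtain e' where "fa_mul (fa_gen x) e - e' \<in> J" "if i \<le> int n then e' \<in> und (nat (int n - i)) else e' = 0"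
    using LA[OF assms(1) _ assms(3)] assms(2) by auto
  moreover have "e' = 0" using calculation(2) assms(2) by (simp split: if_splits)
  ultimately show ?thesis by (metis diff_zero)
qed

end

inductive inspan :: "'g fa set \<Rightarrow> 'g fa \<Rightarrow> bool" for S where
  fs_zero: "inspan S 0"
| fs_base: "a \<in> S \<Longrightarrow> inspan S a"
| fs_add: "inspan S a \<Longrightarrow> inspan S b \<Longrightarrow> inspan S (a + b)"
| fs_smul: "inspan S a \<Longrightarrow> inspan S (fa_smul c a)"

definition fspan :: "'g fa set \<Rightarrow> 'g fa set" where "fspan S = {a. inspan S a}"

lemma fspan_zero[simp]: "0 \<in> fspan S" by (simp add: fspan_def fs_zero)
lemma fspan_base: "a \<in> S \<Longrightarrow> a \<in> fspan S" by (simp add: fspan_def fs_base)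
lemma fspan_add: "a \<in> fspan S \<Longrightarrow> b \<in> fspan S \<Longrightarrow> a + b \<in> fspan S" by (simp add: fspan_def fs_add)
lemma fspan_smul: "a \<in> fspan S \<Longrightarrow> fa_smul c a \<in> fspan S" by (simp add: fspan_def fs_smul)
lemma fspan_induct[consumes 1, case_names zero base add smul]:
  assumes "t \<in> fspan S" "Q 0" "\<And>a. a \<in> S \<Longrightarrow> Q a"
    "\<And>a b. a \<in> fspan S \<Longrightarrow> Q a \<Longrightarrow> b \<in> fspan S \<Longrightarrow> Q b \<Longrightarrow> Q (a + b)"
    "\<And>a c. a \<in> fspan S \<Longrightarrow> Q a \<Longrightarrow> Q (fa_smul c a)"
  shows "Q t"
proof -
  have "inspan S t" using assms(1) by (simp add: fspan_def)
  then show ?thesis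
  proof (induction rule: inspan.induct)
    case fs_zero then show ?case by (rule assms(2))
  next
    case (fs_base a) then show ?case by (rule assms(3))
  next
    case (fs_add a b) then show ?case using assms(4) by (simp add: fspan_def)
  next
    case (fs_smul a c) then show ?case using assms(5) by (simp add: fspan_def)
  qed
qed

lemma fs_sum: "(\<And>i. i \<in> A \<Longrightarrow> f i \<in> fspan S) \<Longrightarrow> sum f A \<in> fspan S"
  by (induction A rule: infinite_finite_induct) (auto intro: fspan_add)

locale sing = verma sg br G chi lam
  for sg :: "complex \<Rightarrow> 'g \<Rightarrow> 'g::ab_group_add"
    and br :: "'g \<Rightarrow> 'g \<Rightarrow> 'g"
    and G :: "int \<Rightarrow> 'g set"
    and chi :: "'g \<Rightarrow> complex" and lam :: complex +
  fixes I :: "'g fa set" and n :: nat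
  assumes irr: "verma_irreducible sg br G chi lam"
    and J_I: "\<And>a. a \<in> J \<Longrightarrow> a \<in> I"
    and I_fin: "\<And>a. a \<in> I \<Longrightarrow> fa_fin a"
    and I_add: "\<And>a b. a \<in> I \<Longrightarrow> b \<in> I \<Longrightarrow> a + b \<in> I"
    and I_smul: "\<And>a c. a \<in> I \<Longrightarrow> fa_smul c a \<in> I"
    and I_lmul: "\<And>a p. a \<in> I \<Longrightarrow> fa_fin p \<Longrightarrow> fa_mul p a \<in> I"
    and I_Aop: "\<And>a. a \<in> I \<Longrightarrow> Aop a \<in> I"
    and one_I: "fa_one \<notin> I"
    and n_pos: "0 < n"
begin

lemma I_zero: "0 \<in> I" using J_I[OF vi_zero'] .
lemma I_uminus: "a \<in> I \<Longrightarrow> - a \<in> I" using I_smul[of a "-1"] by (simp add: fa_smul_minus)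
lemma I_diff: "a \<in> I \<Longrightarrow> b \<in> I \<Longrightarrow> a - b \<in> I"
  using I_add[of a "- b"] I_uminus[of b] by (simp only: diff_conv_add_uminus)
lemma I_sum: "(\<And>i. i \<in> A \<Longrightarrow> f i \<in> I) \<Longrightarrow> sum f A \<in> I"
  by (induction A rule: infinite_finite_induct) (auto intro: I_zero I_add)
lemma UG_I: "a \<in> UG \<Longrightarrow> a \<in> I" using J_I[OF vi_ug'] .

definition W where
  "W = {w. fa_fin w \<and> (\<exists>e\<in>und n. w - e \<in> I) \<and> (\<forall>i x. 0 < i \<longrightarrow> x \<in> G i \<longrightarrow> fa_mul (fa_gen x) w \<in> I)}"

definition Tg where
  "Tg = {t. \<exists>ys w. valid ys \<and> w \<in> W \<and> t = fa_mul (wd ys) w}"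

abbreviation T where "T \<equiv> fspan Tg"

lemma W_fin: "w \<in> W \<Longrightarrow> fa_fin w" by (simp add: W_def)

lemma Tg_I: "valid ys \<Longrightarrow> w \<in> W \<Longrightarrow> fa_mul (wd ys) w \<in> Tg"
  unfolding Tg_def by blast

lemma Tg_fin: "t \<in> Tg \<Longrightarrow> fa_fin t" by (auto simp: Tg_def W_def)

lemma T_fin: "t \<in> T \<Longrightarrow> fa_fin t"
  by (induction rule: fspan_induct) (auto intro!: fin_I Tg_fin)

lemma W_G0:
  assumes w: "w \<in> W" and x: "x \<in> G 0"
  shows "fa_mul (fa_gen x) w \<in> W"
proof -
  have wf: "fa_fin w" using w by (simp add: W_def)
  obtain e where e: "e \<in> und n" "w - e \<in> I" using w by (auto simp: W_def)
  obtain e' where e': "e' \<in> und n" "fa_mul (fa_gen x) e - e' \<in> J" by (rule LA0[OF x e(1)])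
  have "fa_mul (fa_gen x) w - e' = fa_mul (fa_gen x) (w - e) + (fa_mul (fa_gen x) e - e')"
    by (simp add: mul_diff_right)
  also have "\<dots> \<in> I" by (intro I_add I_lmul e(2) J_I e'(2) fin_gen)
  finally have A: "fa_mul (fa_gen x) w - e' \<in> I" .
  have B: "fa_mul (fa_gen x') (fa_mul (fa_gen x) w) \<in> I" if "0 < i'" "x' \<in> G i'" for i' x'
  proof -
    have s1: "fa_mul (fa_gen x') w \<in> I" using w that by (auto simp: W_def)
    have s2: "fa_mul (fa_gen (br x' x)) w \<in> I"
      using w that G_br[OF that(2) x] by (auto simp: W_def)
    have "fa_mul (fa_gen x') (fa_mul (fa_gen x) w) =
       (fa_mul (fa_gen x') (fa_mul (fa_gen x) w) - fa_mul (fa_gen x) (fa_mul (fa_gen x') w)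
         - fa_mul (fa_gen (br x' x)) w)
       + fa_mul (fa_gen x) (fa_mul (fa_gen x') w) + fa_mul (fa_gen (br x' x)) w"
      by simp
    also have "\<dots> \<in> I" by (intro I_add UG_I comm_UG wf I_lmul s1 s2 fin_gen)
    finally show ?thesis .
  qed
  show ?thesis unfolding W_def using A B e'(1) wf by (auto intro!: fin_I)
qed

lemma T_gen_neg:
  assumes "t \<in> T" "d < 0" "y \<in> G d"
  shows "fa_mul (fa_gen y) t \<in> T"
  using assms(1)
proof (induction rule: fspan_induct)
  case zero
  show ?case by simp
next
  case (base a)
  then obtain ys w where a: "valid ys" "w \<in> W" "a = fa_mul (wd ys) w" by (auto simp: Tg_def)
  have "fa_mul (fa_gen y) a = fa_mul (wd ((d, y) # ys)) w"
    by (simp add: a wd_Cons mul_assoc)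
  moreover have "fa_mul (wd ((d, y) # ys)) w \<in> Tg"
    using a assms by (intro Tg_I) auto
  ultimately show ?case by (simp add: fspan_base)
next
  case (add a b)
  then show ?case by (simp add: mul_add_right fspan_add)
next
  case (smul a c)
  then show ?case by (simp add: mul_smul_right fspan_smul)
qed

lemma KEY_hom:
  assumes "x \<in> G i" "valid ys" "w \<in> W"
  shows "\<exists>t'\<in>T. fa_mul (fa_gen x) (fa_mul (wd ys) w) - t' \<in> I"
  using assms
proof (induction ys arbitrary: x i)
  case Nil
  have w1: "fa_mul (wd []) w = w" by simp
  show ?case
  proof (cases "i < 0")
    case True
    have "fa_mul (wd [(i, x)]) w \<in> Tg" unfolding Tg_def using Nil True
      by (intro CollectI exI[of _ "[(i, x)]"] exI[of _ w]) simp
    moreover have "fa_mul (fa_gen x) (fa_mul (wd []) w) - fa_mul (wd [(i, x)]) w = 0"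
      by (simp add: wd_Cons)
    ultimately show ?thesis using I_zero fspan_base by metis
  next
    case False
    show ?thesis
    proof (cases "i = 0")
      case True
      have "fa_mul (fa_gen x) w \<in> W" using W_G0 Nil True by simp
      then have "fa_mul (wd []) (fa_mul (fa_gen x) w) \<in> Tg" by (intro Tg_I) auto
      moreover have "fa_mul (fa_gen x) (fa_mul (wd []) w) - fa_mul (wd []) (fa_mul (fa_gen x) w) = 0"
        by simp
      ultimately show ?thesis using I_zero fspan_base by metis
    next
      case False
      then have "0 < i" using \<open>\<not> i < 0\<close> by simp
      then have "fa_mul (fa_gen x) w \<in> I" using Nil by (auto simp: W_def)
      moreover have "fa_mul (fa_gen x) (fa_mul (wd []) w) - 0 = fa_mul (fa_gen x) w" by simp
      ultimately show ?thesis using fspan_zero by metis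
    qed
  qed
next
  case (Cons p ys)
  obtain d y where p: "p = (d, y)" by (cases p)
  have d: "d < 0" and y: "y \<in> G d" and v: "valid ys" using Cons.prems p by auto
  define R where "R = fa_mul (wd ys) w"
  have Rf: "fa_fin R" using Cons.prems(3) by (simp add: R_def W_fin)
  show ?case
  proof (cases "i < 0")
    case True
    have "fa_mul (wd ((i, x) # p # ys)) w \<in> Tg" unfolding Tg_def using Cons.prems True
      by (intro CollectI exI[of _ "(i, x) # p # ys"] exI[of _ w]) simp
    moreover have "fa_mul (fa_gen x) (fa_mul (wd (p # ys)) w) - fa_mul (wd ((i, x) # p # ys)) w = 0"
      by (simp add: wd_Cons mul_assoc)
    ultimately show ?thesis using I_zero fspan_base by metis
  next
    case False
    obtain t1 where t1: "t1 \<in> T" "fa_mul (fa_gen x) R - t1 \<in> I"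
      using Cons.IH[OF Cons.prems(1) v Cons.prems(3)] unfolding R_def by blast
    obtain t2 where t2: "t2 \<in> T" "fa_mul (fa_gen (br x y)) R - t2 \<in> I"
      using Cons.IH[OF G_br[OF Cons.prems(1) y] v Cons.prems(3)] unfolding R_def by blast
    have w: "fa_mul (wd (p # ys)) w = fa_mul (fa_gen y) R"
      by (simp add: p R_def wd_Cons mul_assoc)
    have "fa_mul (fa_gen x) (fa_mul (wd (p # ys)) w) - (fa_mul (fa_gen y) t1 + t2) =
       (fa_mul (fa_gen x) (fa_mul (fa_gen y) R) - fa_mul (fa_gen y) (fa_mul (fa_gen x) R)
         - fa_mul (fa_gen (br x y)) R)
       + fa_mul (fa_gen y) (fa_mul (fa_gen x) R - t1)
       + (fa_mul (fa_gen (br x y)) R - t2)"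
      by (simp add: w mul_diff_right)
    also have "\<dots> \<in> I" by (intro I_add UG_I comm_UG Rf I_lmul t1(2) t2(2) fin_gen)
    finally have "fa_mul (fa_gen x) (fa_mul (wd (p # ys)) w) - (fa_mul (fa_gen y) t1 + t2) \<in> I" .
    moreover have "fa_mul (fa_gen y) t1 + t2 \<in> T"
      by (intro fspan_add T_gen_neg[OF t1(1) d y] t2(1))
    ultimately show ?thesis by blast
  qed
qed

end

context sing begin

lemma KEY_gen:
  assumes t: "t \<in> Tg"
  shows "\<exists>t'\<in>T. fa_mul (fa_gen x) t - t' \<in> I"
proof -
  obtain ys w where tw: "valid ys" "w \<in> W" "t = fa_mul (wd ys) w" using t by (auto simp: Tg_def)
  have tf: "fa_fin t" using Tg_fin[OF t] .
  define S where "S = {i. gpr G i x \<noteq> 0}"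
  have Sf: "finite S" by (simp add: S_def)
  have "\<forall>i. \<exists>t'. t' \<in> T \<and> fa_mul (fa_gen (gpr G i x)) t - t' \<in> I"
    using KEY_hom[OF gpr_in tw(1,2)] tw(3) by blast
  then obtain f where f: "\<And>i. f i \<in> T" "\<And>i. fa_mul (fa_gen (gpr G i x)) t - f i \<in> I"
    by metis
  have xs: "(\<Sum>i\<in>S. gpr G i x) = x" unfolding S_def by (rule gpr_sum[symmetric])
  have ug: "fa_gen x - (\<Sum>i\<in>S. fa_gen (gpr G i x)) \<in> UG"
    using ug_gen_sum[OF Sf, of "\<lambda>i. gpr G i x" sg br] unfolding xs .
  have "fa_mul (fa_gen x) t - (\<Sum>i\<in>S. f i) =
     fa_mul (fa_gen x - (\<Sum>i\<in>S. fa_gen (gpr G i x))) t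
     + (\<Sum>i\<in>S. fa_mul (fa_gen (gpr G i x)) t - f i)"
    by (simp add: mul_diff_left mul_sum_left sum_subtractf)
  also have "\<dots> \<in> I"
    by (intro I_add UG_I ug_rmul'[OF ug tf] I_sum f(2))
  finally show ?thesis using fs_sum[of S f Tg] f(1) by blast
qed

lemma KEY_T:
  assumes "t \<in> T"
  shows "\<exists>t'\<in>T. fa_mul (fa_gen x) t - t' \<in> I"
  using assms
proof (induction rule: fspan_induct)
  case zero
  show ?case using I_zero by (intro bexI[of _ 0]) simp_all
next
  case (base a)
  then show ?case by (rule KEY_gen)
next
  case (add a b)
  obtain ta where ta: "ta \<in> T" "fa_mul (fa_gen x) a - ta \<in> I" using add by blast
  obtain tb where tb: "tb \<in> T" "fa_mul (fa_gen x) b - tb \<in> I" using add by blast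
  have "fa_mul (fa_gen x) (a + b) - (ta + tb) = (fa_mul (fa_gen x) a - ta) + (fa_mul (fa_gen x) b - tb)"
    by (simp add: mul_add_right)
  also have "\<dots> \<in> I" by (intro I_add ta(2) tb(2))
  finally show ?case using fspan_add[OF ta(1) tb(1)] by blast
next
  case (smul a c)
  obtain ta where ta: "ta \<in> T" "fa_mul (fa_gen x) a - ta \<in> I" using smul by blast
  have "fa_mul (fa_gen x) (fa_smul c a) - fa_smul c ta = fa_smul c (fa_mul (fa_gen x) a - ta)"
    by (simp add: mul_smul_right fa_smul_diff)
  also have "\<dots> \<in> I" by (intro I_smul ta(2))
  finally show ?case using fspan_smul[OF ta(1)] by blast
qed

definition L where "L = {a. fa_fin a \<and> (\<exists>t\<in>T. a - t \<in> I)}"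

lemma L_cases: "L = J \<or> L = {a. fa_fin a}"
proof -
  have "J \<subseteq> L"
  proof
    fix a assume a: "a \<in> J"
    then show "a \<in> L" unfolding L_def using vi_fin[OF a] J_I[OF a] fspan_zero
      by (intro CollectI conjI bexI[of _ 0]) simp_all
  qed
  moreover have "L \<subseteq> {a. fa_fin a}" by (auto simp: L_def)
  moreover have "\<forall>a\<in>L. \<forall>b\<in>L. fa_add a b \<in> L"
  proof (intro ballI)
    fix a b assume "a \<in> L" "b \<in> L"
    then obtain ta tb where a: "fa_fin a" "ta \<in> T" "a - ta \<in> I" and b: "fa_fin b" "tb \<in> T" "b - tb \<in> I"
      by (auto simp: L_def)
    have eq: "fa_add a b - (ta + tb) = (a - ta) + (b - tb)" by (simp add: fa_add_eq algebra_simps)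
    have "fa_add a b - (ta + tb) \<in> I" unfolding eq by (rule I_add[OF a(3) b(3)])
    then show "fa_add a b \<in> L" unfolding L_def using a b fspan_add[OF a(2) b(2)]
      by (auto simp: fa_add_eq)
  qed
  moreover have "\<forall>c. \<forall>a\<in>L. fa_smul c a \<in> L"
  proof (intro allI ballI)
    fix c a assume "a \<in> L"
    then obtain ta where a: "fa_fin a" "ta \<in> T" "a - ta \<in> I" by (auto simp: L_def)
    have "fa_smul c a - fa_smul c ta = fa_smul c (a - ta)" by (simp add: fa_smul_diff)
    then have "fa_smul c a - fa_smul c ta \<in> I" using I_smul[OF a(3)] by simp
    then show "fa_smul c a \<in> L" unfolding L_def using a fspan_smul[OF a(2)] by auto
  qed
  moreover have "\<forall>x. \<forall>a\<in>L. fa_mul (fa_gen x) a \<in> L"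
  proof (intro allI ballI)
    fix x a assume "a \<in> L"
    then obtain ta where a: "fa_fin a" "ta \<in> T" "a - ta \<in> I" by (auto simp: L_def)
    obtain t' where t': "t' \<in> T" "fa_mul (fa_gen x) ta - t' \<in> I" using KEY_T[OF a(2)] by blast
    have "fa_mul (fa_gen x) a - t' = fa_mul (fa_gen x) (a - ta) + (fa_mul (fa_gen x) ta - t')"
      by (simp add: mul_diff_right)
    also have "\<dots> \<in> I" by (intro I_add I_lmul a(3) t'(2) fin_gen)
    finally show "fa_mul (fa_gen x) a \<in> L" unfolding L_def using a t' by auto
  qed
  ultimately show ?thesis using irr unfolding verma_irreducible_def by blast
qed

definition E :: "nat \<Rightarrow> 'g fa \<Rightarrow> 'g fa" where
  "E k a = Aop a - fa_smul (2 powi (- int k)) a"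

fun opE :: "nat list \<Rightarrow> 'g fa \<Rightarrow> 'g fa" where
  "opE [] a = a"
| "opE (k # ks) a = E k (opE ks a)"

lemma E_add: "E k (a + b) = E k a + E k b"
  by (simp add: E_def Aop_add fa_smul_add)
lemma E_smul: "E k (fa_smul c a) = fa_smul c (E k a)"
  by (simp add: E_def Aop_smul fa_smul_diff fa_smul_smul mult.commute)
lemma E_diff: "E k (a - b) = E k a - E k b"
  by (simp add: E_def Aop_diff fa_smul_diff)
lemma E_I: "a \<in> I \<Longrightarrow> E k a \<in> I"
  unfolding E_def by (intro I_diff I_Aop I_smul)
lemma E_comm: "E k (E k' a) = E k' (E k a)"
  by (simp add: E_def Aop_def fa_smul_def fun_eq_iff fun_apply_simps algebra_simps)

lemma opE_add: "opE ks (a + b) = opE ks a + opE ks b"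
  by (induction ks) (simp_all add: E_add)
lemma opE_diff: "opE ks (a - b) = opE ks a - opE ks b"
  by (induction ks) (simp_all add: E_diff)
lemma opE_smul: "opE ks (fa_smul c a) = fa_smul c (opE ks a)"
  by (induction ks) (simp_all add: E_smul)
lemma opE_I: "a \<in> I \<Longrightarrow> opE ks a \<in> I"
  by (induction ks) (simp_all add: E_I)
lemma opE_append: "opE (xs @ ys) a = opE xs (opE ys a)"
  by (induction xs) simp_all
lemma E_opE: "E k (opE ks a) = opE ks (E k a)"
  by (induction ks) (simp_all add: E_comm)
lemma opE_comm: "opE xs (opE ys a) = opE ys (opE xs a)"
  by (induction xs) (simp_all add: E_opE)

lemma E_one: "E k (fa_smul c fa_one) = fa_smul (c * (1 - 2 powi (- int k))) fa_one"
proof -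
  have "E k (fa_smul c fa_one) = fa_smul c fa_one - fa_smul (2 powi (- int k)) (fa_smul c fa_one)"
    by (simp add: E_def Aop_smul)
  also have "\<dots> = fa_smul (c * (1 - 2 powi (- int k))) fa_one"
    by (simp add: fa_smul_def fun_eq_iff fun_apply_simps algebra_simps)
  finally show ?thesis .
qed

lemma opE_one: "opE ks fa_one = fa_smul (\<Prod>k\<leftarrow>ks. 1 - 2 powi (- int k)) fa_one"
proof (induction ks)
  case Nil then show ?case by simp
next
  case (Cons k ks) then show ?case by (simp add: E_one mult.commute)
qed

lemma factor_nz: "1 \<le> k \<Longrightarrow> (1::complex) - 2 powi (- int k) \<noteq> 0"
proof
  assume k: "1 \<le> k" and "(1::complex) - 2 powi (- int k) = 0"
  then have "(2::complex) powi (- int k) = 1" by simp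
  then have "inverse ((2::complex) ^ k) = 1" by (simp add: power_int_minus)
  then have "(2::complex) ^ k = 1" by (metis inverse_1 inverse_inverse_eq)
  then have "(2::nat) ^ k = 1" by (metis of_nat_eq_1_iff of_nat_numeral of_nat_power)
  then show False using k by simp
qed

lemma DEG:
  assumes "t \<in> T"
  shows "\<exists>ks. (\<forall>k\<in>set ks. 1 \<le> k) \<and> opE ks t \<in> I"
  using assms
proof (induction rule: fspan_induct)
  case zero
  show ?case using I_zero by (intro exI[of _ "[]"]) simp
next
  case (base a)
  then obtain ys w where a: "valid ys" "w \<in> W" "a = fa_mul (wd ys) w" by (auto simp: Tg_def)
  obtain e where e: "e \<in> und n" "w - e \<in> I" using a(2) by (auto simp: W_def)
  define r where "r = nat (- sum_list (map fst ys))"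
  have r: "sum_list (map fst ys) = - int r" using valid_sum_le[OF a(1)] by (simp add: r_def)
  have e2: "fa_mul (wd ys) e \<in> und (n + r)" by (rule und_lmul[OF e(1) a(1) r])
  have A: "E (n + r) (fa_mul (wd ys) e) \<in> I"
    unfolding E_def using Aop_und[OF e2] by (intro UG_I) simp
  have B: "a - fa_mul (wd ys) e \<in> I"
    using I_lmul[OF e(2) wd_fin[of ys]] by (simp add: a(3) mul_diff_right)
  have "E (n + r) a = E (n + r) (a - fa_mul (wd ys) e) + E (n + r) (fa_mul (wd ys) e)"
    by (simp add: E_diff)
  also have "\<dots> \<in> I" by (intro I_add E_I B A)
  finally have "opE [n + r] a \<in> I" by simp
  then show ?case using n_pos by (intro exI[of _ "[n + r]"]) auto
next
  case (add a b)
  obtain ka where ka: "\<forall>k\<in>set ka. 1 \<le> k" "opE ka a \<in> I" using add by blast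
  obtain kb where kb: "\<forall>k\<in>set kb. 1 \<le> k" "opE kb b \<in> I" using add by blast
  have "opE (ka @ kb) (a + b) = opE kb (opE ka a) + opE ka (opE kb b)"
    by (simp add: opE_append opE_add opE_comm[of ka kb])
  also have "\<dots> \<in> I" by (intro I_add opE_I ka(2) kb(2))
  finally show ?case using ka(1) kb(1) by (intro exI[of _ "ka @ kb"]) auto
next
  case (smul a c)
  obtain ka where ka: "\<forall>k\<in>set ka. 1 \<le> k" "opE ka a \<in> I" using smul by blast
  have "opE ka (fa_smul c a) \<in> I" using I_smul[OF ka(2)] by (simp add: opE_smul)
  then show ?case using ka(1) by blast
qed

theorem singular:
  assumes mf: "fa_fin m" and me: "\<exists>e\<in>und n. m - e \<in> I"
    and ms: "\<And>i x. 0 < i \<Longrightarrow> x \<in> G i \<Longrightarrow> fa_mul (fa_gen x) m \<in> I"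
  shows "m \<in> I"
proof -
  have mW: "m \<in> W" using mf me ms by (auto simp: W_def)
  have mT: "m \<in> T" using fspan_base[OF Tg_I[OF valid_Nil mW]] by simp
  consider "L = J" | "L = {a. fa_fin a}" using L_cases by blast
  then show ?thesis
  proof cases
    case 1
    have "m \<in> L" unfolding L_def using mf mT I_zero
      by (intro CollectI conjI bexI[of _ m]) simp_all
    then show ?thesis using 1 J_I by blast
  next
    case 2
    then have "fa_one \<in> L" by simp
    then obtain t where t: "t \<in> T" "fa_one - t \<in> I" by (auto simp: L_def)
    obtain ks where ks: "\<forall>k\<in>set ks. 1 \<le> k" "opE ks t \<in> I" using DEG[OF t(1)] by blast
    have "opE ks fa_one = opE ks (fa_one - t) + opE ks t" by (simp add: opE_diff)
    also have "\<dots> \<in> I" by (intro I_add opE_I t(2) ks(2))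
    finally have c: "fa_smul (\<Prod>k\<leftarrow>ks. 1 - 2 powi (- int k)) fa_one \<in> I" by (simp add: opE_one)
    have nz: "(\<Prod>k\<leftarrow>ks. (1::complex) - 2 powi (- int k)) \<noteq> 0"
      using ks(1) factor_nz by (induction ks) auto
    have "fa_smul (inverse (\<Prod>k\<leftarrow>ks. 1 - 2 powi (- int k))) (fa_smul (\<Prod>k\<leftarrow>ks. 1 - 2 powi (- int k)) fa_one) \<in> I"
      by (rule I_smul[OF c])
    then have "fa_one \<in> I" using nz by (simp add: fa_smul_smul)
    then show ?thesis using one_I by simp
  qed
qed

end

definition lin :: "(complex \<Rightarrow> 'v \<Rightarrow> 'v::ab_group_add) \<Rightarrow> ('v \<Rightarrow> complex) \<Rightarrow> bool" where
  "lin sv psi \<longleftrightarrow> (\<forall>u v. psi (u + v) = psi u + psi v) \<and> (\<forall>c v. psi (sv c v) = c * psi v)"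

lemma sepV:
  assumes vs: "vector_space sv" and all: "\<And>psi. lin sv psi \<Longrightarrow> psi s = 0"
  shows "s = 0"
proof -
  interpret V: vector_space sv by (rule vs)
  obtain B where B: "B \<subseteq> UNIV" "V.independent B" "UNIV \<subseteq> V.span B" "card B = V.dim UNIV"
    using V.basis_exists by blast
  have sp: "v \<in> V.span B" for v using B(3) by blast
  have lin: "lin sv (\<lambda>v. V.representation B v b)" for b
    unfolding lin_def using V.representation_add[OF B(2) sp sp] V.representation_scale[OF B(2) sp]
    by simp
  have "V.representation B s b = 0" for b using all[OF lin] .
  then have "{b. V.representation B s b \<noteq> 0} = {}" by simp
  then show ?thesis using V.sum_nonzero_representation_eq[OF B(2) sp, of s] by simp
qed

definition Fn :: "(complex \<Rightarrow> 'g \<Rightarrow> 'g) \<Rightarrow> ('g \<Rightarrow> 'g \<Rightarrow> 'g::ab_group_add) \<Rightarrow> (int \<Rightarrow> 'g set) \<Rightarrow> ('g \<Rightarrow> complex) \<Rightarrow> complex \<Rightarrow> ('g fa \<Rightarrow> complex) \<Rightarrow> bool" where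
  "Fn sg br G chi lam f \<longleftrightarrow>
        (\<forall>a b. fa_fin a \<longrightarrow> fa_fin b \<longrightarrow> f (fa_add a b) = f a + f b) \<and>
        (\<forall>c a. fa_fin a \<longrightarrow> f (fa_smul c a) = c * f a) \<and>
        (\<forall>a\<in>verma_ideal sg br G chi lam. f a = 0)"

definition Sf :: "(complex \<Rightarrow> 'v \<Rightarrow> 'v::ab_group_add) \<Rightarrow> ('g fa \<Rightarrow> complex) \<Rightarrow> ('g fa \<times> 'v) list \<Rightarrow> 'v" where
  "Sf sv f ts = sum_list (map (\<lambda>(m, v). sv (f m) v) ts)"

lemma tz_iff: "tensor_zero sg br G chi lam sv ts \<longleftrightarrow> (\<forall>f. Fn sg br G chi lam f \<longrightarrow> Sf sv f ts = 0)"
  by (simp add: tensor_zero_def Fn_def Sf_def)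

lemma Sf_append: "Sf sv f (xs @ ys) = Sf sv f xs + Sf sv f ys"
  by (simp add: Sf_def)
lemma Sf_mul: "Sf sv f (map (\<lambda>(m, v). (fa_mul p m, v)) ts) = Sf sv (\<lambda>a. f (fa_mul p a)) ts"
  by (induction ts) (auto simp: Sf_def)

definition msum :: "('v \<Rightarrow> complex) \<Rightarrow> ('g fa \<times> 'v) list \<Rightarrow> 'g fa" where
  "msum psi ts = sum_list (map (\<lambda>(m, v). fa_smul (psi v) m) ts)"

lemma msum_fin: "(\<forall>(m, v)\<in>set ts. fa_fin m) \<Longrightarrow> fa_fin (msum psi ts)"
  by (induction ts) (auto simp: msum_def intro!: fin_I)

lemma mul_msum: "fa_mul p (msum psi ts) = msum psi (map (\<lambda>(m, v). (fa_mul p m, v)) ts)"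
  by (induction ts) (auto simp: msum_def mul_add_right mul_smul_right)

context
  fixes sv :: "complex \<Rightarrow> 'v \<Rightarrow> 'v::ab_group_add"
  assumes vsv: "vector_space sv"
begin

interpretation W: vector_space sv by (rule vsv)

lemma Sf_neg: "Sf sv f (map (\<lambda>(m, v). (m, - v)) ts) = - Sf sv f ts"
  by (induction ts) (auto simp: Sf_def)

lemma Sf_zero: "(\<forall>(m, v)\<in>set ts. f m = 0) \<Longrightarrow> Sf sv f ts = 0"
  by (induction ts) (auto simp: Sf_def)

lemma psi_Sf: "lin sv psi \<Longrightarrow> psi (Sf sv f ts) = sum_list (map (\<lambda>(m, v). psi v * f m) ts)"
proof (induction ts)
  case Nil
  have "psi (0 + 0) = psi 0 + psi 0" using Nil unfolding lin_def by blast
  then show ?case by (simp add: Sf_def)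
next
  case (Cons p ts)
  then show ?case by (cases p) (simp add: Sf_def lin_def mult.commute)
qed

lemma Sf_act:
  assumes "lie_module sg br sv act"
  shows "Sf sv f (map (\<lambda>(m, v). (m, act x v)) ts) = act x (Sf sv f ts)"
proof -
  have add: "act x (u + v) = act x u + act x v" for u v
    using assms by (simp add: lie_module_def)
  have sm: "act x (sv c v) = sv c (act x v)" for c v
    using assms by (simp add: lie_module_def)
  interpret additive "act x" by standard (rule add)
  show ?thesis by (induction ts) (auto simp: Sf_def add sm zero)
qed

end

context verma begin

lemma Fn_zero: "Fn sg br G chi lam f \<Longrightarrow> f 0 = 0"
  using vi_zero' unfolding Fn_def by blast
lemma Fn_add: "Fn sg br G chi lam f \<Longrightarrow> fa_fin a \<Longrightarrow> fa_fin b \<Longrightarrow> f (a + b) = f a + f b"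
  unfolding Fn_def by (simp add: fa_add_eq)
lemma Fn_smul: "Fn sg br G chi lam f \<Longrightarrow> fa_fin a \<Longrightarrow> f (fa_smul c a) = c * f a"
  unfolding Fn_def by simp
lemma Fn_J: "Fn sg br G chi lam f \<Longrightarrow> a \<in> J \<Longrightarrow> f a = 0"
  unfolding Fn_def by simp

lemma Fn_lmul: "Fn sg br G chi lam f \<Longrightarrow> fa_fin p \<Longrightarrow> Fn sg br G chi lam (\<lambda>a. f (fa_mul p a))"
  unfolding Fn_def
  by (auto simp: fa_add_eq mul_add_right mul_smul_right intro: J_lmul)

lemma Fn_Aop: "Fn sg br G chi lam f \<Longrightarrow> Fn sg br G chi lam (\<lambda>a. f (Aop a))"
  unfolding Fn_def
  by (auto simp: fa_add_eq Aop_add Aop_smul Aop_fin intro: Aop_J)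

lemma Fn_msum:
  assumes "Fn sg br G chi lam f" "\<forall>(m, v)\<in>set ts. fa_fin m"
  shows "f (msum psi ts) = sum_list (map (\<lambda>(m, v). psi v * f m) ts)"
  using assms(2)
proof (induction ts)
  case Nil then show ?case using Fn_zero[OF assms(1)] by (simp add: msum_def)
next
  case (Cons p ts)
  obtain m v where p: "p = (m, v)" by (cases p)
  have fm: "fa_fin m" using Cons.prems p by auto
  have "f (msum psi (p # ts)) = f (fa_smul (psi v) m + msum psi ts)" by (simp add: msum_def p)
  also have "\<dots> = psi v * f m + f (msum psi ts)"
    using Cons.prems fm by (simp add: Fn_add[OF assms(1)] Fn_smul[OF assms(1)] msum_fin)
  finally show ?case using Cons by (simp add: p)
qed

definition Jc where "Jc = {a. fa_fin a \<and> (\<forall>f. Fn sg br G chi lam f \<longrightarrow> f a = 0)}"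

lemma Jc_sing:
  assumes irr: "verma_irreducible sg br G chi lam" and one: "fa_one \<notin> Jc" and n: "0 < n"
  shows "sing sg br G chi lam Jc n"
proof (unfold_locales)
  show "verma_irreducible sg br G chi lam" by (rule irr)
  show "a \<in> J \<Longrightarrow> a \<in> Jc" for a by (auto simp: Jc_def vi_fin Fn_J)
  show "a \<in> Jc \<Longrightarrow> fa_fin a" for a by (simp add: Jc_def)
  show "a \<in> Jc \<Longrightarrow> b \<in> Jc \<Longrightarrow> a + b \<in> Jc" for a b by (auto simp: Jc_def Fn_add)
  show "a \<in> Jc \<Longrightarrow> fa_smul c a \<in> Jc" for a c by (auto simp: Jc_def Fn_smul)
  show "a \<in> Jc \<Longrightarrow> fa_fin p \<Longrightarrow> fa_mul p a \<in> Jc" for a p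
    unfolding Jc_def using Fn_lmul by auto
  show "a \<in> Jc \<Longrightarrow> Aop a \<in> Jc" for a
    unfolding Jc_def using Fn_Aop Aop_fin by auto
  show "fa_one \<notin> Jc" by (rule one)
  show "0 < n" by (rule n)
qed

end

context verma begin

lemma msum_comp:
  assumes "\<forall>(m, v)\<in>set ts. m \<in> verma_comp sg br G chi lam n"
  shows "\<exists>e\<in>und n. msum psi ts - e \<in> J"
  using assms
proof (induction ts)
  case Nil
  show ?case using vi_zero' by (intro bexI[of _ 0]) (simp_all add: msum_def)
next
  case (Cons p ts)
  obtain m v where p: "p = (m, v)" by (cases p)
  have "m \<in> verma_comp sg br G chi lam n" using Cons.prems p by auto
  then obtain a where a: "a \<in> und n" "m - a \<in> J" by (auto simp: verma_comp_def fa_diff_eq)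
  obtain e where e: "e \<in> und n" "msum psi ts - e \<in> J" using Cons by auto
  have eq: "msum psi (p # ts) - (fa_smul (psi v) a + e) = fa_smul (psi v) (m - a) + (msum psi ts - e)"
    by (simp add: p msum_def fa_smul_diff algebra_simps)
  have "msum psi (p # ts) - (fa_smul (psi v) a + e) \<in> J"
    unfolding eq by (intro vi_add' J_smul a(2) e(2))
  moreover have "fa_smul (psi v) a + e \<in> und n" by (intro und_add' und_smul' a(1) e(1))
  ultimately show ?case by blast
qed

lemma Sf_psi_map:
  "sum_list (map (\<lambda>(m, v). psi v * f m) (map (\<lambda>(m, v). (fa_mul p m, v)) ts)) =
   sum_list (map (\<lambda>(m, v). psi v * f (fa_mul p m)) ts)"
  by (induction ts) auto

lemma main:
  fixes sv :: "complex \<Rightarrow> 'v \<Rightarrow> 'v::ab_group_add" and act :: "'g \<Rightarrow> 'v \<Rightarrow> 'v"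
    and w :: 'v and z z' :: "('g, 'v) ctensor"
  assumes irr: "verma_irreducible sg br G chi lam"
    and lm: "lie_module sg br sv act"
    and wf: "ctensor_wf sg br G chi lam z"
    and inv: "ctensor_invariant sg br G chi lam sv act z"
    and ld: "ctensor_leading sg br G chi lam sv w z"
    and wf': "ctensor_wf sg br G chi lam z'"
    and inv': "ctensor_invariant sg br G chi lam sv act z'"
    and ld': "ctensor_leading sg br G chi lam sv w z'"
  shows "ctensor_eq sg br G chi lam sv z z'"
proof -
  have vsv: "vector_space sv" using lm by (simp add: lie_module_def)
  interpret W: vector_space sv by (rule vsv)
  define u where "u n = z n @ map (\<lambda>(m, v). (m, - v)) (z' n)" for n
  have Sf_u: "Sf sv f (u n) = Sf sv f (z n) - Sf sv f (z' n)" for f n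
    by (simp add: u_def Sf_append Sf_neg[OF vsv])
  have comp_u: "\<forall>(m, v)\<in>set (u n). m \<in> verma_comp sg br G chi lam n" for n
    using wf wf' by (auto simp: u_def ctensor_wf_def)
  have fin_u: "\<forall>(m, v)\<in>set (u n). fa_fin m" for n
    using comp_u[of n] by (auto simp: verma_comp_def)
  have goal: "\<forall>n. tensor_zero sg br G chi lam sv (u n)"
  proof (cases "fa_one \<in> Jc")
    case True
    have H: "f a = 0" if f: "Fn sg br G chi lam f" and a: "fa_fin a" for f a
    proof -
      have "Fn sg br G chi lam (\<lambda>b. f (fa_mul a b))" by (rule Fn_lmul[OF f a])
      then have "f (fa_mul a fa_one) = 0" using True by (auto simp: Jc_def)
      then show ?thesis by simp
    qed
    show ?thesis unfolding tz_iff
    proof (intro allI impI)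
      fix n f assume f: "Fn sg br G chi lam f"
      have "\<forall>(m, v)\<in>set (u n). f m = 0"
      proof (intro ballI)
        fix p assume p: "p \<in> set (u n)"
        obtain m v where mv: "p = (m, v)" by (cases p)
        have "fa_fin m" using fin_u[of n] p mv by auto
        then show "case p of (m, v) \<Rightarrow> f m = 0" using H[OF f] mv by simp
      qed
      then show "Sf sv f (u n) = 0" by (rule Sf_zero[OF vsv])
    qed
  next
    case False
    note one = False
    show ?thesis
    proof
      fix n
      show "tensor_zero sg br G chi lam sv (u n)"
      proof (induction n rule: less_induct)
        case (less n)
        show ?case
        proof (cases "n = 0")
          case True
          show ?thesis unfolding tz_iff
          proof (intro allI impI)
            fix f assume f: "Fn sg br G chi lam f"
            have "Sf sv f (z 0 @ [(fa_one, - w)]) = 0" using ld f by (simp add: ctensor_leading_def tz_iff)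
            moreover have "Sf sv f (z' 0 @ [(fa_one, - w)]) = 0" using ld' f by (simp add: ctensor_leading_def tz_iff)
            ultimately have "Sf sv f (z 0) = Sf sv f (z' 0)" by (simp add: Sf_append Sf_def)
            then show "Sf sv f (u n) = 0" using True by (simp add: Sf_u)
          qed
        next
          case False
          then have npos: "0 < n" by simp
          have IH: "Sf sv f (u k) = 0" if "k < n" "Fn sg br G chi lam f" for k f
            using less[OF that(1)] that(2) by (simp add: tz_iff)
          have S1: "Sf sv (\<lambda>a. f (fa_mul (fa_gen x) a)) (u n) = 0"
            if i: "0 < i" "i \<le> int n" and x: "x \<in> G i" and f: "Fn sg br G chi lam f" for i x f
          proof (cases "x = 0")
            case True
            have "f (fa_mul (fa_gen x) m) = 0" if "fa_fin m" for m
              using Fn_J[OF f vi_ug'[OF ug_rmul'[OF ug_gen_zero that]]] True by simp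
            then show ?thesis using fin_u[of n] by (auto intro!: Sf_zero[OF vsv])
          next
            case False
            define N where "N = nat (int n - i)"
            have N: "int N + i = int n" using i by (simp add: N_def)
            have Nn: "N < n" using i by (simp add: N_def)
            have set: "{j. gpr G j x \<noteq> 0 \<and> 0 \<le> int N + j} = {i}"
              using gpr_hom[OF x] False N by auto
            have gx: "gpr G i x = x" using gpr_hom[OF x] by simp
            have ca: "ctensor_act G act x zz N = map (\<lambda>(m, v). (fa_mul (fa_gen x) m, v)) (zz n)
                 @ map (\<lambda>(m, v). (m, act x v)) (zz N)" for zz :: "('g, 'v) ctensor"
              unfolding ctensor_act_def set using N gx by simp
            have "Sf sv f (ctensor_act G act x z N) = 0"
              using inv f by (simp add: ctensor_invariant_def tz_iff)
            then have A: "Sf sv (\<lambda>a. f (fa_mul (fa_gen x) a)) (z n) + act x (Sf sv f (z N)) = 0"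
              by (simp add: ca Sf_append Sf_mul Sf_act[OF vsv lm])
            have "Sf sv f (ctensor_act G act x z' N) = 0"
              using inv' f by (simp add: ctensor_invariant_def tz_iff)
            then have B: "Sf sv (\<lambda>a. f (fa_mul (fa_gen x) a)) (z' n) + act x (Sf sv f (z' N)) = 0"
              by (simp add: ca Sf_append Sf_mul Sf_act[OF vsv lm])
            have "Sf sv f (z N) = Sf sv f (z' N)" using IH[OF Nn f] by (simp add: Sf_u)
            then show ?thesis using A B by (simp add: Sf_u eq_neg_iff_add_eq_0[symmetric])
          qed
          have S2: "msum psi (u n) \<in> Jc" if psi: "lin sv psi" for psi
          proof -
            interpret S: sing sg br G chi lam Jc n by (rule Jc_sing[OF irr one npos])
            obtain e where e: "e \<in> und n" "msum psi (u n) - e \<in> J"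
              using msum_comp[OF comp_u] by blast
            have mf: "fa_fin (msum psi (u n))" by (rule msum_fin[OF fin_u])
            show ?thesis
            proof (rule S.singular[OF mf])
              show "\<exists>e\<in>und n. msum psi (u n) - e \<in> Jc" using e S.J_I by blast
              fix i x assume i: "0 < i" and x: "x \<in> G i"
              show "fa_mul (fa_gen x) (msum psi (u n)) \<in> Jc"
              proof (cases "i \<le> int n")
                case True
                have "f (fa_mul (fa_gen x) (msum psi (u n))) = 0" if f: "Fn sg br G chi lam f" for f
                proof -
                  have fin2: "\<forall>(m, v)\<in>set (map (\<lambda>(m, v). (fa_mul (fa_gen x) m, v)) (u n)). fa_fin m"
                    using fin_u[of n] by auto
                  have "f (fa_mul (fa_gen x) (msum psi (u n))) =
                     f (msum psi (map (\<lambda>(m, v). (fa_mul (fa_gen x) m, v)) (u n)))"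
                    by (simp only: mul_msum)
                  also have "\<dots> = sum_list (map (\<lambda>(m, v). psi v * f m) (map (\<lambda>(m, v). (fa_mul (fa_gen x) m, v)) (u n)))"
                    by (rule Fn_msum[OF f fin2])
                  also have "\<dots> = sum_list (map (\<lambda>(m, v). psi v * f (fa_mul (fa_gen x) m)) (u n))"
                    by (rule Sf_psi_map)
                  also have "\<dots> = psi (Sf sv (\<lambda>a. f (fa_mul (fa_gen x) a)) (u n))"
                    by (simp add: psi_Sf[OF vsv psi])
                  also have "\<dots> = psi 0" by (simp add: S1[OF i True x f])
                  also have "\<dots> = 0"
                  proof -
                    have "psi (0 + 0) = psi 0 + psi 0" using psi unfolding lin_def by blast
                    then show ?thesis by simp
                  qed
                  finally show ?thesis .
                qed
                then show ?thesis unfolding Jc_def using mf by auto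
              next
                case False
                have "fa_mul (fa_gen x) (msum psi (u n)) =
                    fa_mul (fa_gen x) (msum psi (u n) - e) + fa_mul (fa_gen x) e"
                  by (simp add: mul_diff_right)
                also have "\<dots> \<in> J"
                  by (intro vi_add' J_lmul e(2) fin_gen LAbig[OF x _ e(1)]) (use False in simp)
                finally show ?thesis by (rule S.J_I)
              qed
            qed
          qed
          show ?thesis unfolding tz_iff
          proof (intro allI impI)
            fix f assume f: "Fn sg br G chi lam f"
            show "Sf sv f (u n) = 0"
            proof (rule sepV[OF vsv])
              fix psi assume psi: "lin sv psi"
              have "psi (Sf sv f (u n)) = sum_list (map (\<lambda>(m, v). psi v * f m) (u n))"
                by (rule psi_Sf[OF vsv psi])
              also have "\<dots> = f (msum psi (u n))" by (rule Fn_msum[OF f fin_u, symmetric])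
              also have "\<dots> = 0" using S2[OF psi] f by (auto simp: Jc_def)
              finally show "psi (Sf sv f (u n)) = 0" .
            qed
          qed
        qed
      qed
    qed
  qed
  then show ?thesis unfolding ctensor_eq_def u_def by blast
qed

end

theorem proposition4p1:
  fixes sg :: "complex \<Rightarrow> 'g \<Rightarrow> 'g::ab_group_add"
    and br :: "'g \<Rightarrow> 'g \<Rightarrow> 'g"
    and G :: "int \<Rightarrow> 'g set"
    and chi :: "'g \<Rightarrow> complex"
    and lam :: complex
    and sv :: "complex \<Rightarrow> 'v \<Rightarrow> 'v::ab_group_add"
    and act :: "'g \<Rightarrow> 'v \<Rightarrow> 'v"
    and w :: 'v
    and z z' :: "('g, 'v) ctensor"
  assumes "graded_lie_algebra sg br G"
    and "nonsingular_character sg br G chi"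
    and "verma_irreducible sg br G chi lam"
    and "lie_module sg br sv act"
    and "ctensor_wf sg br G chi lam z"
    and "ctensor_invariant sg br G chi lam sv act z"
    and "ctensor_leading sg br G chi lam sv w z"
    and "ctensor_wf sg br G chi lam z'"
    and "ctensor_invariant sg br G chi lam sv act z'"
    and "ctensor_leading sg br G chi lam sv w z'"
  shows "ctensor_eq sg br G chi lam sv z z'"
proof -
  interpret verma sg br G chi lam
    by unfold_locales (use assms(1,2) in auto)
  show ?thesis by (rule main) (use assms in auto)
qed

end
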